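(* Let $(P,e)$ be a tree pattern with $P\in\mathcal{T}_k$, and let $\sigma(P,e)=(\tau(P),C)$ be the mesh pattern defined below. Then for every $n\ge 0$, the preorder map $\tau$ restricts to a bijection $\tau\colon \mathcal{T}_n(P,e)\to S_n(231,\sigma(P,e))$, where $S_n(231,\sigma(P,e))$ is the set of permutations of $[n]$ that avoid both the classical pattern $231$ and the mesh pattern $\sigma(P,e)$.
   Context: For $n\ge 0$, $\mathcal{T}_n$ is the set of binary trees with $n$ vertices (every vertex has at most one left and at most one right child), with vertices labeled $1,\dots,n$ by the search tree property (vertices in the left subtree of $i$ are smaller than $i$, those in its right subtree larger); $\mathcal{T}_0=\{\varepsilon\}$. For a vertex $i$: $c_L(i),c_R(i),p(i)$ denote its left child, right child, parent ($\varepsilon$ if nonexistent); $r(T)$ is the root; $T(i)$ is the subtree rooted at $i$; $L(i),R(i)$ are the subtrees rooted at $c_L(i),c_R(i)$ (empty if that child does not exist); $L(T)=L(r(T))$, $R(T)=R(r(T))$. $B_R(i)=\{i,c_R(i),c_R^2(i),\dots\}$ is the set of vertices of the right branch starting at $i$ (following right children as long as they exist), and $B_R^-(i)$ is $B_R(i)$ with its last (lowest) vertex removed. A tree pattern is a pair $(P,e)$ with $P\in\mathcal{T}_k$ and $e\colon[k]\setminus\{r(P)\}\to\{0,1\}$. A tree $T\in\mathcal{T}_n$ contains $(P,e)$ if there is an injection $f\colon[k]\to[n]$ such that for every non-root vertex $i$ of $P$: if $e(i)=1$, then $f(i)$ is the left (resp. right) child of $f(p(i))$ in $T$ when $i$ is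 the left (resp. right) child of $p(i)$ in $P$; if $e(i)=0$, then $f(i)\in L(f(p(i)))$ (resp. $f(i)\in R(f(p(i)))$) when $i$ is the left (resp. right) child of $p(i)$. Otherwise $T$ avoids $(P,e)$; $\mathcal{T}_n(P,e)$ is the set of $T\in\mathcal{T}_n$ avoiding $(P,e)$. The preorder permutation is defined by $\tau(\varepsilon)=$ empty and $\tau(T)=(r(T),\tau(L(T)),\tau(R(T)))$. Mesh patterns: for $\pi\in S_n$ let $G(\pi)=\{(i,\pi(i)):i\in[n]\}$. A mesh pattern is $(\tau,C)$ with $\tau\in S_k$, $C\subseteq\{0,\dots,k\}^2$. A permutation $\pi\in S_n$ contains $(\tau,C)$ if there are indices $\nu_1<\dots<\nu_k$ such that $\pi(\nu_1),\dots,\pi(\nu_k)$ are in the same relative order as $\tau$, and, letting $\lambda_1<\dots<\lambda_k$ be these values sorted, with $\nu_0=\lambda_0=0$, $\nu_{k+1}=\lambda_{k+1}=n+1$, we have $G(\pi)\cap\big((\nu_i,\nu_{i+1})\times(\lambda_j,\lambda_{j+1})\big)=\emptyset$ for all $(i,j)\in C$. Classical pattern containment is the case $C=\emptyset$. Definition of $\sigma(P,e)$: let $\rho=\tau(P)^{-1}$. For $i\in[k]$ let $C_i=\{(\rho(i)-1,j): j\in B_R^-(i)\}$; for $i\in[k]\setminus\{r(P)\}$ let $C_i'=\emptyset$ if $e(i)=0$ and $C_i'=\{(\rho(i)-1,\min P(i)-1),(\rho(i)-1,\max P(i))\}$ if $e(i)=1$, where $\min P(i),\max P(i)$ are the smallest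 and largest vertex labels in the subtree $P(i)$. Then $\sigma(P,e)=\big(\tau(P),\bigcup_{i\in[k]}C_i\cup\bigcup_{i\in[k]\setminus\{r(P)\}}C_i'\big)$. *)

theory Defs
  imports "HOL-Library.Tree"
begin

text \<open>T_n: binary trees whose vertex labels are exactly 1..n and satisfy the
(strict) search tree property. The empty tree Leaf plays the role of epsilon.\<close>
definition trees :: "nat \<Rightarrow> nat tree set" where
  "trees n = {t. bst t \<and> set_tree t = {1..n}}"

fun lsub :: "'a tree \<Rightarrow> 'a tree" where
  "lsub Leaf = Leaf" | "lsub (Node l a r) = l"

fun rsub :: "'a tree \<Rightarrow> 'a tree" where
  "rsub Leaf = Leaf" | "rsub (Node l a r) = r"

fun subtree :: "'a tree \<Rightarrow> 'a \<Rightarrow> 'a tree" where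
  "subtree Leaf i = Leaf"
| "subtree (Node l a r) i =
     (if i = a then Node l a r
      else if i \<in> set_tree l then subtree l i else subtree r i)"

definition Lset :: "'a tree \<Rightarrow> 'a \<Rightarrow> 'a set" where
  "Lset t i = set_tree (lsub (subtree t i))"
definition Rset :: "'a tree \<Rightarrow> 'a \<Rightarrow> 'a set" where
  "Rset t i = set_tree (rsub (subtree t i))"

definition is_lchild :: "'a tree \<Rightarrow> 'a \<Rightarrow> 'a \<Rightarrow> bool" where
  "is_lchild t c p \<longleftrightarrow> p \<in> set_tree t \<and> lsub (subtree t p) \<noteq> Leaf \<and> value (lsub (subtree t p)) = c"
definition is_rchild :: "'a tree \<Rightarrow> 'a \<Rightarrow> 'a \<Rightarrow> bool" where
  "is_rchild t c p \<longleftrightarrow> p \<in> set_tree t \<and> rsub (subtree t p) \<noteq> Leaf \<and> value (rsub (subtree t p)) = c"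

text \<open>parent p(i) (only meaningful for non-root vertices)\<close>
definition parent :: "'a tree \<Rightarrow> 'a \<Rightarrow> 'a" where
  "parent t i = (THE p. is_lchild t i p \<or> is_rchild t i p)"

text \<open>Tree pattern (P,e): e is given as a function nat => bool (True = 1, False = 0);
only its values on the non-root vertices of P matter.\<close>
definition tree_contains :: "nat tree \<Rightarrow> nat tree \<Rightarrow> (nat \<Rightarrow> bool) \<Rightarrow> bool" where
  "tree_contains T P e \<longleftrightarrow>
     (\<exists>f. inj_on f (set_tree P) \<and> f ` set_tree P \<subseteq> set_tree T \<and>
        (\<forall>i \<in> set_tree P. i \<noteq> value P \<longrightarrow>
           (is_lchild P i (parent P i) \<longrightarrow>
              (if e i then is_lchild T (f i) (f (parent P i))
               else f i \<in> Lset T (f (parent P i)))) \<and>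
           (is_rchild P i (parent P i) \<longrightarrow>
              (if e i then is_rchild T (f i) (f (parent P i))
               else f i \<in> Rset T (f (parent P i))))))"

definition trees_avoiding :: "nat \<Rightarrow> nat tree \<Rightarrow> (nat \<Rightarrow> bool) \<Rightarrow> nat tree set" where
  "trees_avoiding n P e = {T \<in> trees n. \<not> tree_contains T P e}"

text \<open>A permutation pi of [n] is represented by its one-line notation, a list
xs with pi(i) = xs ! (i - 1) for i in 1..n.\<close>
definition perms :: "nat \<Rightarrow> nat list set" where
  "perms n = {xs. length xs = n \<and> distinct xs \<and> set xs = {1..n}}"

definition pval :: "nat list \<Rightarrow> nat \<Rightarrow> nat" where
  "pval xs i = xs ! (i - 1)"

text \<open>Containment of the mesh pattern (tau, C) in pi (k = length tau, n = length pi).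
nu' and lam' are the extended index / value sequences with nu_0 = lam_0 = 0 and
nu_(k+1) = lam_(k+1) = n+1; lam_1 < ... < lam_k are the occurrence values sorted.\<close>
definition mesh_contains :: "nat list \<Rightarrow> nat list \<Rightarrow> (nat \<times> nat) set \<Rightarrow> bool" where
  "mesh_contains pi tau C \<longleftrightarrow>
     (let n = length pi; k = length tau in
      \<exists>\<nu> :: nat \<Rightarrow> nat.
        strict_mono_on {1..k} \<nu> \<and> \<nu> ` {1..k} \<subseteq> {1..n} \<and>
        (\<forall>a \<in> {1..k}. \<forall>b \<in> {1..k}.
            pval pi (\<nu> a) < pval pi (\<nu> b) \<longleftrightarrow> pval tau a < pval tau b) \<and>
        (let nu' = (\<lambda>i. if i = 0 then 0 else if i = k + 1 then n + 1 else \<nu> i);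
             lam' = (\<lambda>j. if j = 0 then 0 else if j = k + 1 then n + 1
                         else sorted_list_of_set ((\<lambda>a. pval pi (\<nu> a)) ` {1..k}) ! (j - 1))
         in \<forall>(i, j) \<in> C. \<not> (\<exists>x \<in> {1..n}. nu' i < x \<and> x < nu' (i + 1) \<and>
                                       lam' j < pval pi x \<and> pval pi x < lam' (j + 1))))"

definition classical_contains :: "nat list \<Rightarrow> nat list \<Rightarrow> bool" where
  "classical_contains pi tau \<longleftrightarrow> mesh_contains pi tau {}"

fun rspine :: "'a tree \<Rightarrow> 'a list" where
  "rspine Leaf = []" | "rspine (Node l a r) = a # rspine r"

definition BR :: "'a tree \<Rightarrow> 'a \<Rightarrow> 'a set" where
  "BR t i = set (rspine (subtree t i))"
definition BR_minus :: "'a tree \<Rightarrow> 'a \<Rightarrow> 'a set" where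
  "BR_minus t i = set (butlast (rspine (subtree t i)))"

text \<open>rho = tau(P)^{-1}: rho(i) is the (1-based) position of i in the preorder word\<close>
definition rho :: "nat tree \<Rightarrow> nat \<Rightarrow> nat" where
  "rho P i = (THE m. m \<in> {1..length (preorder P)} \<and> pval (preorder P) m = i)"

definition sigma_C :: "nat tree \<Rightarrow> (nat \<Rightarrow> bool) \<Rightarrow> (nat \<times> nat) set" where
  "sigma_C P e =
     (\<Union>i \<in> set_tree P. {(rho P i - 1, j) | j. j \<in> BR_minus P i}) \<union>
     (\<Union>i \<in> set_tree P - {value P}.
        if e i then {(rho P i - 1, Min (set_tree (subtree P i)) - 1),
                     (rho P i - 1, Max (set_tree (subtree P i)))}
        else {})"

definition perms_avoiding :: "nat \<Rightarrow> nat tree \<Rightarrow> (nat \<Rightarrow> bool) \<Rightarrow> nat list set" where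
  "perms_avoiding n P e =
     {xs \<in> perms n. \<not> classical_contains xs [2, 3, 1] \<and>
                    \<not> mesh_contains xs (preorder P) (sigma_C P e)}"

end

theory Submission
  imports Defs
begin

fun idx :: "'a list \<Rightarrow> 'a \<Rightarrow> nat" where
  "idx [] x = 0"
| "idx (y # ys) x = (if y = x then 0 else Suc (idx ys x))"

lemma idx_lt: "x \<in> set xs \<Longrightarrow> idx xs x < length xs"
  by (induction xs) auto

lemma nth_idx: "x \<in> set xs \<Longrightarrow> xs ! idx xs x = x"
  by (induction xs) auto

lemma idx_nth: "distinct xs \<Longrightarrow> i < length xs \<Longrightarrow> idx xs (xs ! i) = i"
proof (induction xs arbitrary: i)
  case (Cons a xs)
  then show ?case by (cases i) (auto simp: nth_mem)
qed simp

lemma idx_append: "idx (xs @ ys) x = (if x \<in> set xs then idx xs x else length xs + idx ys x)"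
  by (induction xs) auto

lemma idx_inj: "x \<in> set xs \<Longrightarrow> y \<in> set xs \<Longrightarrow> idx xs x = idx xs y \<Longrightarrow> x = y"
  by (metis nth_idx)

definition D :: "'a tree \<Rightarrow> 'a \<Rightarrow> 'a set" where
  "D t x = set_tree (subtree t x)"

definition bef :: "'a tree \<Rightarrow> 'a \<Rightarrow> 'a \<Rightarrow> bool" where
  "bef t x y \<longleftrightarrow> idx (preorder t) x < idx (preorder t) y"

lemma subtree_notin: "x \<notin> set_tree t \<Longrightarrow> subtree t x = Leaf"
  by (induction t) auto

lemma subtree_in: "x \<in> set_tree t \<Longrightarrow> \<exists>l r. subtree t x = Node l x r"
  by (induction t) auto

lemma subtree_subset: "set_tree (subtree t x) \<subseteq> set_tree t"
  by (induction t) auto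

lemma bst_subtree: "bst t \<Longrightarrow> bst (subtree t x)"
  by (induction t) auto

lemma bst_lr: "bst (Node l a r) \<Longrightarrow> x \<in> set_tree l \<Longrightarrow> x \<notin> set_tree r \<and> x \<noteq> a \<and> x < a"
  by (metis bst_wrt.simps(2) order_less_asym order_less_irrefl)

lemma bst_rl: "bst (Node l a r) \<Longrightarrow> x \<in> set_tree r \<Longrightarrow> x \<notin> set_tree l \<and> x \<noteq> a \<and> a < x"
  by (metis bst_wrt.simps(2) order_less_asym order_less_irrefl)

lemma subtree_Node_l: "bst (Node l a r) \<Longrightarrow> x \<in> set_tree l \<Longrightarrow> subtree (Node l a r) x = subtree l x"
  using bst_lr by fastforce

lemma subtree_Node_r: "bst (Node l a r) \<Longrightarrow> x \<in> set_tree r \<Longrightarrow> subtree (Node l a r) x = subtree r x"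
  using bst_rl by fastforce

lemma subtree_self: "subtree (Node l a r) a = Node l a r"
  by simp

lemma subtree_subtree: "bst t \<Longrightarrow> y \<in> set_tree (subtree t x) \<Longrightarrow> subtree (subtree t x) y = subtree t y"
proof (induction t)
  case (Node l a r)
  show ?case
  proof (cases "x = a")
    case True then show ?thesis by simp
  next
    case False
    show ?thesis
    proof (cases "x \<in> set_tree l")
      case True
      then have "y \<in> set_tree l" using Node.prems False subtree_subset by fastforce
      then show ?thesis using Node True False by auto
    next
      case F2: False
      then have "y \<in> set_tree r" using Node.prems False subtree_subset by fastforce
      moreover have "x \<in> set_tree r" using Node.prems F2 False subtree_notin by fastforce
      ultimately show ?thesis using Node F2 False subtree_Node_r[OF Node.prems(1)] by auto
    qed
  qed
qed simp

lemma Lset_notin: "x \<notin> set_tree t \<Longrightarrow> Lset t x = {}"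
  by (simp add: Lset_def subtree_notin)
lemma Rset_notin: "x \<notin> set_tree t \<Longrightarrow> Rset t x = {}"
  by (simp add: Rset_def subtree_notin)
lemma D_notin: "x \<notin> set_tree t \<Longrightarrow> D t x = {}"
  by (simp add: D_def subtree_notin)

lemma D_sub: "D t x \<subseteq> set_tree t"
  by (simp add: D_def subtree_subset)

lemma vertex_facts:
  assumes "bst t" "x \<in> set_tree t"
  shows "D t x = insert x (Lset t x \<union> Rset t x)" "\<forall>y\<in>Lset t x. y < x" "\<forall>y\<in>Rset t x. x < y"
proof -
  obtain l r where s: "subtree t x = Node l x r" using subtree_in[OF assms(2)] by blast
  have "bst (Node l x r)" using bst_subtree[OF assms(1), of x] s by simp
  then show "D t x = insert x (Lset t x \<union> Rset t x)" "\<forall>y\<in>Lset t x. y < x" "\<forall>y\<in>Rset t x. x < y"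
    using s by (auto simp: D_def Lset_def Rset_def)
qed

lemma Lset_D: "Lset t x \<subseteq> D t x"
  by (cases "subtree t x") (auto simp: D_def Lset_def)
lemma Rset_D: "Rset t x \<subseteq> D t x"
  by (cases "subtree t x") (auto simp: D_def Rset_def)
lemma Lset_sub: "Lset t x \<subseteq> set_tree t" using Lset_D D_sub by fast
lemma Rset_sub: "Rset t x \<subseteq> set_tree t" using Rset_D D_sub by fast

lemma self_D: "x \<in> set_tree t \<Longrightarrow> x \<in> D t x"
  using subtree_in[of x t] by (auto simp: D_def)

lemma Lset_lt: "bst t \<Longrightarrow> y \<in> Lset t x \<Longrightarrow> y < x"
  using vertex_facts Lset_notin by fastforce
lemma Rset_gt: "bst t \<Longrightarrow> y \<in> Rset t x \<Longrightarrow> x < y"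
  using vertex_facts Rset_notin by fastforce

lemma D_cases: "bst t \<Longrightarrow> y \<in> D t x \<Longrightarrow> y = x \<or> y \<in> Lset t x \<or> y \<in> Rset t x"
  using vertex_facts D_notin by fastforce

lemma Lset_iff: "bst t \<Longrightarrow> y \<in> Lset t x \<longleftrightarrow> y \<in> D t x \<and> y < x"
  using vertex_facts D_notin Lset_notin Rset_notin by fastforce
lemma Rset_iff: "bst t \<Longrightarrow> y \<in> Rset t x \<longleftrightarrow> y \<in> D t x \<and> x < y"
  using vertex_facts D_notin Lset_notin Rset_notin by fastforce

lemma D_trans: "bst t \<Longrightarrow> y \<in> D t x \<Longrightarrow> D t y \<subseteq> D t x"
  using subtree_subtree[of t y x] subtree_subset[of "subtree t x" y] by (simp add: D_def)

lemma subtree_via: "bst t \<Longrightarrow> y \<in> D t x \<Longrightarrow> subtree t y = subtree (subtree t x) y"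
  using subtree_subtree[of t y x] by (simp add: D_def)

lemma L_trans: "bst t \<Longrightarrow> y \<in> Lset t x \<Longrightarrow> D t y \<subseteq> Lset t x"
proof -
  assume b: "bst t" and y: "y \<in> Lset t x"
  then have "x \<in> set_tree t" using Lset_notin by fastforce
  then obtain l r where s: "subtree t x = Node l x r" using subtree_in[of x t] by blast
  have bn: "bst (Node l x r)" using bst_subtree[OF b, of x] s by simp
  have yl: "y \<in> set_tree l" using y s by (simp add: Lset_def)
  have "y \<in> D t x" using y Lset_D by fast
  then have "subtree t y = subtree (Node l x r) y" using subtree_via[OF b] s by simp
  also have "\<dots> = subtree l y" using subtree_Node_l[OF bn yl] .
  finally show ?thesis using s subtree_subset[of l y] by (auto simp: D_def Lset_def)
qed

lemma R_trans: "bst t \<Longrightarrow> y \<in> Rset t x \<Longrightarrow> D t y \<subseteq> Rset t x"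
proof -
  assume b: "bst t" and y: "y \<in> Rset t x"
  then have "x \<in> set_tree t" using Rset_notin by fastforce
  then obtain l r where s: "subtree t x = Node l x r" using subtree_in[of x t] by blast
  have bn: "bst (Node l x r)" using bst_subtree[OF b, of x] s by simp
  have yl: "y \<in> set_tree r" using y s by (simp add: Rset_def)
  have "y \<in> D t x" using y Rset_D by fast
  then have "subtree t y = subtree (Node l x r) y" using subtree_via[OF b] s by simp
  also have "\<dots> = subtree r y" using subtree_Node_r[OF bn yl] .
  finally show ?thesis using s subtree_subset[of r y] by (auto simp: D_def Rset_def)
qed

lemma D_antisym: "bst t \<Longrightarrow> y \<in> D t x \<Longrightarrow> x \<in> D t y \<Longrightarrow> x = y"
proof (rule ccontr)
  assume b: "bst t" and y: "y \<in> D t x" and x: "x \<in> D t y" and ne: "x \<noteq> y"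
  from D_cases[OF b y] ne consider "y \<in> Lset t x" | "y \<in> Rset t x" by auto
  then show False
  proof cases
    case 1 then have "x \<in> Lset t x" using L_trans[OF b] x by blast
    then show False using Lset_lt[OF b] by blast
  next
    case 2 then have "x \<in> Rset t x" using R_trans[OF b] x by blast
    then show False using Rset_gt[OF b] by blast
  qed
qed

lemma LR_disj: "bst t \<Longrightarrow> y \<in> Lset t x \<Longrightarrow> y \<notin> Rset t x"
  using Lset_lt Rset_gt by fastforce

lemma bst_distinct: "bst t \<Longrightarrow> distinct (preorder t)"
proof (induction t)
  case (Node l a r)
  then have "set_tree l \<inter> set_tree r = {}" "a \<notin> set_tree l" "a \<notin> set_tree r"
    using bst_lr[OF Node.prems] by auto
  then show ?case using Node by auto
qed simp

lemma layout: "bst t \<Longrightarrow> subtree t x = Node l x r \<Longrightarrow>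
   \<exists>us vs. preorder t = us @ x # preorder l @ preorder r @ vs"
proof (induction t)
  case Leaf then show ?case by simp
next
  case (Node l1 a r1)
  show ?case
  proof (cases "x = a")
    case True then show ?thesis using Node.prems by (rule_tac x="[]" in exI) auto
  next
    case False
    show ?thesis
    proof (cases "x \<in> set_tree l1")
      case True
      then obtain us vs where "preorder l1 = us @ x # preorder l @ preorder r @ vs"
        using Node False by auto
      then show ?thesis by (rule_tac x="a # us" in exI) auto
    next
      case F2: False
      then obtain us vs where "preorder r1 = us @ x # preorder l @ preorder r @ vs"
        using Node False by auto
      then show ?thesis by (rule_tac x="a # preorder l1 @ us" in exI) auto
    qed
  qed
qed

lemma idx_Node: "idx (preorder (Node l a r)) z =
   (if z = a then 0 else if z \<in> set_tree l then Suc (idx (preorder l) z) else Suc (size l + idx (preorder r) z))"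
  by (simp add: idx_append)

lemma D_Node_a: "D (Node l a r) a = set_tree (Node l a r)" by (simp add: D_def)
lemma D_Node_l: "bst (Node l a r) \<Longrightarrow> x \<in> set_tree l \<Longrightarrow> D (Node l a r) x = D l x"
  by (simp add: D_def subtree_Node_l del: subtree.simps)
lemma D_Node_r: "bst (Node l a r) \<Longrightarrow> x \<in> set_tree r \<Longrightarrow> D (Node l a r) x = D r x"
  by (simp add: D_def subtree_Node_r del: subtree.simps)
lemma L_Node_a: "Lset (Node l a r) a = set_tree l" by (simp add: Lset_def)
lemma L_Node_l: "bst (Node l a r) \<Longrightarrow> x \<in> set_tree l \<Longrightarrow> Lset (Node l a r) x = Lset l x"
  by (simp add: Lset_def subtree_Node_l del: subtree.simps)
lemma L_Node_r: "bst (Node l a r) \<Longrightarrow> x \<in> set_tree r \<Longrightarrow> Lset (Node l a r) x = Lset r x"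
  by (simp add: Lset_def subtree_Node_r del: subtree.simps)
lemma R_Node_a: "Rset (Node l a r) a = set_tree r" by (simp add: Rset_def)
lemma R_Node_l: "bst (Node l a r) \<Longrightarrow> x \<in> set_tree l \<Longrightarrow> Rset (Node l a r) x = Rset l x"
  by (simp add: Rset_def subtree_Node_l del: subtree.simps)
lemma R_Node_r: "bst (Node l a r) \<Longrightarrow> x \<in> set_tree r \<Longrightarrow> Rset (Node l a r) x = Rset r x"
  by (simp add: Rset_def subtree_Node_r del: subtree.simps)

lemma split_Node:
  assumes b: "bst (Node l a r)"
  shows "(\<exists>w. x \<in> Lset (Node l a r) w \<and> y \<in> Rset (Node l a r) w) \<longleftrightarrow>
     (x \<in> set_tree l \<and> y \<in> set_tree r) \<or> (\<exists>w. x \<in> Lset l w \<and> y \<in> Rset l w) \<or>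
     (\<exists>w. x \<in> Lset r w \<and> y \<in> Rset r w)" (is "?L \<longleftrightarrow> ?R")
proof
  assume ?L
  then obtain w where w: "x \<in> Lset (Node l a r) w" "y \<in> Rset (Node l a r) w" by blast
  then have "w \<in> set_tree (Node l a r)" using Lset_notin by fastforce
  then consider "w = a" | "w \<in> set_tree l" | "w \<in> set_tree r" by auto
  then show ?R
  proof cases
    case 1 then show ?thesis using w by (simp add: L_Node_a R_Node_a)
  next
    case 2 then show ?thesis using w L_Node_l[OF b] R_Node_l[OF b] by auto
  next
    case 3 then show ?thesis using w L_Node_r[OF b] R_Node_r[OF b] by auto
  qed
next
  assume ?R
  then consider "x \<in> set_tree l \<and> y \<in> set_tree r" | w where "x \<in> Lset l w" "y \<in> Rset l w"
    | w where "x \<in> Lset r w" "y \<in> Rset r w" by blast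
  then show ?L
  proof cases
    case 1 then show ?thesis by (rule_tac x=a in exI) (simp add: L_Node_a R_Node_a)
  next
    case (2 w)
    then have "w \<in> set_tree l" using Lset_notin by fastforce
    then show ?thesis using 2 L_Node_l[OF b] R_Node_l[OF b] by (rule_tac x=w in exI) auto
  next
    case (3 w)
    then have "w \<in> set_tree r" using Lset_notin by fastforce
    then show ?thesis using 3 L_Node_r[OF b] R_Node_r[OF b] by (rule_tac x=w in exI) auto
  qed
qed

lemma bef_char:
  assumes "bst t" "x \<in> set_tree t" "y \<in> set_tree t" "x \<noteq> y"
  shows "bef t x y \<longleftrightarrow> y \<in> D t x \<or> (\<exists>w. x \<in> Lset t w \<and> y \<in> Rset t w)"
  using assms
proof (induction t)
  case Leaf then show ?case by simp
next
  case (Node l a r)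
  note b = Node.prems(1)
  have bl: "bst l" and br: "bst r" using b by auto
  have Ll: "Lset l w \<subseteq> set_tree l" "Rset l w \<subseteq> set_tree l" "D l w \<subseteq> set_tree l" for w
    using Lset_sub Rset_sub D_sub by fast+
  have Lr: "Lset r w \<subseteq> set_tree r" "Rset r w \<subseteq> set_tree r" "D r w \<subseteq> set_tree r" for w
    using Lset_sub Rset_sub D_sub by fast+
  have dis: "z \<in> set_tree l \<Longrightarrow> z \<notin> set_tree r \<and> z \<noteq> a" for z using bst_lr[OF b] by blast
  have dis2: "z \<in> set_tree r \<Longrightarrow> z \<notin> set_tree l \<and> z \<noteq> a" for z using bst_rl[OF b] by blast
  have an: "a \<notin> set_tree l" "a \<notin> set_tree r" using dis dis2 by blast+
  have bef_eq: "bef (Node l a r) x y \<longleftrightarrow> idx (preorder (Node l a r)) x < idx (preorder (Node l a r)) y"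
    by (simp add: bef_def)
  consider "x = a" | "x \<in> set_tree l" | "x \<in> set_tree r" using Node.prems by auto
  then show ?case
  proof cases
    case 1
    then show ?thesis using Node.prems by (auto simp: bef_def idx_Node D_Node_a)
  next
    case 2
    consider "y = a" | "y \<in> set_tree l" | "y \<in> set_tree r" using Node.prems by auto
    then show ?thesis
    proof cases
      case 1
      have "a \<notin> D l x" using Ll an by blast
      moreover have "\<not> (\<exists>w. x \<in> Lset l w \<and> a \<in> Rset l w)" "\<not> (\<exists>w. x \<in> Lset r w \<and> a \<in> Rset r w)"
        using Ll Lr an by blast+
      ultimately show ?thesis using 1 2 dis an split_Node[OF b] D_Node_l[OF b 2]
        by (auto simp: bef_def idx_Node simp del: preorder.simps)
    next
      case 3
      then have "bef (Node l a r) x y" using 2 dis dis2 idx_lt[of x "preorder l"] by (auto simp: bef_def idx_Node simp del: preorder.simps)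
      then show ?thesis using 2 3 split_Node[OF b] by blast
    next
      case 22: 2
      have "bef l x y \<longleftrightarrow> y \<in> D l x \<or> (\<exists>w. x \<in> Lset l w \<and> y \<in> Rset l w)"
        using Node.IH(1)[OF bl 2 22 Node.prems(4)] .
      moreover have "bef (Node l a r) x y \<longleftrightarrow> bef l x y"
        using 2 22 an by (auto simp: bef_def idx_Node simp del: preorder.simps)
      moreover have "\<not> (\<exists>w. x \<in> Lset r w \<and> y \<in> Rset r w)" using Lr 2 dis by blast
      ultimately show ?thesis using split_Node[OF b] D_Node_l[OF b 2] 2 22 dis by blast
    qed
  next
    case 3
    consider "y = a" | "y \<in> set_tree l" | "y \<in> set_tree r" using Node.prems by auto
    then show ?thesis
    proof cases
      case 1
      have "a \<notin> D r x" using Lr an by blast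
      moreover have "\<not> (\<exists>w. x \<in> Lset l w \<and> a \<in> Rset l w)" "\<not> (\<exists>w. x \<in> Lset r w \<and> a \<in> Rset r w)"
        using Ll Lr an by blast+
      ultimately show ?thesis using 1 3 dis2 an split_Node[OF b] D_Node_r[OF b 3]
        by (auto simp: bef_def idx_Node simp del: preorder.simps)
    next
      case 2
      have "y \<notin> D r x" using Lr 2 dis by blast
      moreover have "\<not> (\<exists>w. x \<in> Lset l w \<and> y \<in> Rset l w)" "\<not> (\<exists>w. x \<in> Lset r w \<and> y \<in> Rset r w)"
        using Ll Lr 2 3 dis dis2 by blast+
      ultimately show ?thesis using 2 3 dis dis2 split_Node[OF b] D_Node_r[OF b 3] idx_lt[of y "preorder l"]
        by (auto simp: bef_def idx_Node simp del: preorder.simps)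
    next
      case 33: 3
      have "bef r x y \<longleftrightarrow> y \<in> D r x \<or> (\<exists>w. x \<in> Lset r w \<and> y \<in> Rset r w)"
        using Node.IH(2)[OF br 3 33 Node.prems(4)] .
      moreover have "bef (Node l a r) x y \<longleftrightarrow> bef r x y"
        using 3 33 dis2 an by (auto simp: bef_def idx_Node simp del: preorder.simps)
      moreover have "\<not> (\<exists>w. x \<in> Lset l w \<and> y \<in> Rset l w)" using Ll 3 dis2 by blast
      ultimately show ?thesis using split_Node[OF b] D_Node_r[OF b 3] 3 33 dis2 by blast
    qed
  qed
qed

lemma D_in: "y \<in> D t x \<Longrightarrow> x \<in> set_tree t \<and> y \<in> set_tree t"
  using D_notin D_sub by fastforce
lemma L_in: "y \<in> Lset t x \<Longrightarrow> x \<in> set_tree t \<and> y \<in> set_tree t"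
  using Lset_notin Lset_sub by fastforce
lemma R_in: "y \<in> Rset t x \<Longrightarrow> x \<in> set_tree t \<and> y \<in> set_tree t"
  using Rset_notin Rset_sub by fastforce

lemma bef_total: "x \<in> set_tree t \<Longrightarrow> y \<in> set_tree t \<Longrightarrow> x \<noteq> y \<Longrightarrow> bef t x y \<or> bef t y x"
  unfolding bef_def using idx_inj[of x "preorder t" y] by fastforce
lemma bef_asym: "bef t x y \<Longrightarrow> \<not> bef t y x" unfolding bef_def by simp
lemma bef_irrefl: "\<not> bef t x x" unfolding bef_def by simp
lemma bef_trans: "bef t x y \<Longrightarrow> bef t y z \<Longrightarrow> bef t x z" unfolding bef_def by simp

lemma bef_D: "bst t \<Longrightarrow> y \<in> D t x \<Longrightarrow> y \<noteq> x \<Longrightarrow> bef t x y"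
  using bef_char D_in by metis
lemma bef_split: "bst t \<Longrightarrow> x \<in> Lset t w \<Longrightarrow> y \<in> Rset t w \<Longrightarrow> bef t x y"
  using bef_char L_in R_in LR_disj by metis
lemma bef_not_D: "bst t \<Longrightarrow> bef t y x \<Longrightarrow> y \<notin> D t x"
  using bef_D bef_asym bef_irrefl by metis

lemma bef_L: "bst t \<Longrightarrow> x \<in> set_tree t \<Longrightarrow> y \<in> set_tree t \<Longrightarrow> bef t x y \<Longrightarrow> y < x \<Longrightarrow> y \<in> Lset t x"
proof -
  assume b: "bst t" and xy: "x \<in> set_tree t" "y \<in> set_tree t" "bef t x y" "y < x"
  then have "y \<in> D t x \<or> (\<exists>w. x \<in> Lset t w \<and> y \<in> Rset t w)" using bef_char[OF b] by (metis bef_irrefl)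
  then show ?thesis
  proof
    assume "y \<in> D t x" then show ?thesis using Lset_iff[OF b] xy by blast
  next
    assume "\<exists>w. x \<in> Lset t w \<and> y \<in> Rset t w"
    then obtain w where "x \<in> Lset t w" "y \<in> Rset t w" by blast
    then have "x < w" "w < y" using Lset_lt[OF b] Rset_gt[OF b] by blast+
    then show ?thesis using xy by simp
  qed
qed

lemma idx_notin: "x \<notin> set xs \<Longrightarrow> idx xs x = length xs"
  by (induction xs) auto
lemma idx_le: "idx xs x \<le> length xs"
  by (induction xs) auto
lemma bef_in1: "bef t a b \<Longrightarrow> a \<in> set_tree t"
  unfolding bef_def by (metis idx_le idx_notin leD set_preorder)

lemma bef_lt_D: "bst t \<Longrightarrow> bef t a b \<Longrightarrow> a < b \<Longrightarrow> z \<in> D t b \<Longrightarrow> a < z"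
proof -
  assume b: "bst t" and h: "bef t a b" "a < b" "z \<in> D t b"
  have ab: "a \<in> set_tree t" "b \<in> set_tree t" using D_in[OF h(3)] bef_in1[OF h(1)] by blast+
  have "b \<in> D t a \<or> (\<exists>w. a \<in> Lset t w \<and> b \<in> Rset t w)" using bef_char[OF b ab] h by auto
  then show ?thesis
  proof
    assume "b \<in> D t a"
    then have "b \<in> Rset t a" using Rset_iff[OF b] h by blast
    then show ?thesis using R_trans[OF b] h(3) Rset_gt[OF b] by blast
  next
    assume "\<exists>w. a \<in> Lset t w \<and> b \<in> Rset t w"
    then obtain w where "a \<in> Lset t w" "b \<in> Rset t w" by blast
    then show ?thesis using R_trans[OF b] h(3) Rset_gt[OF b] Lset_lt[OF b] by fastforce
  qed
qed

lemma bef_gt_D: "bst t \<Longrightarrow> bef t a b \<Longrightarrow> b < a \<Longrightarrow> z \<in> D t b \<Longrightarrow> z < a"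
proof -
  assume b: "bst t" and h: "bef t a b" "b < a" "z \<in> D t b"
  have ab: "a \<in> set_tree t" "b \<in> set_tree t" using D_in[OF h(3)] bef_in1[OF h(1)] by blast+
  have "b \<in> Lset t a" using bef_L[OF b ab h(1,2)] .
  then show ?thesis using L_trans[OF b] h(3) Lset_lt[OF b] by blast
qed

lemma bef_D_or_lt: "bst t \<Longrightarrow> c \<in> set_tree t \<Longrightarrow> bef t b c \<Longrightarrow> c \<in> D t b \<or> b < c"
proof -
  assume b: "bst t" and h: "c \<in> set_tree t" "bef t b c"
  have "b \<in> set_tree t" using bef_in1[OF h(2)] by blast
  then have "c \<in> D t b \<or> (\<exists>w. b \<in> Lset t w \<and> c \<in> Rset t w)" using bef_char[OF b _ h(1)] h bef_irrefl by metis
  then show ?thesis using Lset_lt[OF b] Rset_gt[OF b] by fastforce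
qed

lemma no231: "bst t \<Longrightarrow> c \<in> set_tree t \<Longrightarrow> bef t a b \<Longrightarrow> bef t b c \<Longrightarrow> c < a \<Longrightarrow> a < b \<Longrightarrow> False"
proof -
  assume b: "bst t" and h: "c \<in> set_tree t" "bef t a b" "bef t b c" "c < a" "a < b"
  have "c \<in> D t b \<or> b < c" using bef_D_or_lt[OF b h(1,3)] .
  then show False
  proof
    assume "c \<in> D t b" then have "a < c" using bef_lt_D[OF b h(2,5)] by blast
    then show False using h by simp
  next
    assume "b < c" then show False using h by simp
  qed
qed

lemma interval: "bst t \<Longrightarrow> y \<in> set_tree t \<Longrightarrow> y \<notin> D t u \<Longrightarrow> a \<in> D t u \<Longrightarrow> b \<in> D t u \<Longrightarrow> a < y \<Longrightarrow> y < b \<Longrightarrow> False"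
proof -
  assume bs: "bst t" and h: "y \<in> set_tree t" "y \<notin> D t u" "a \<in> D t u" "b \<in> D t u" "a < y" "y < b"
  have u: "u \<in> set_tree t" "u \<noteq> y" using D_in h self_D by metis+
  consider "bef t u y" | "bef t y u" using bef_total[OF u(1) h(1) u(2)] by blast
  then show False
  proof cases
    case 1
    then have "y \<in> D t u \<or> (\<exists>w. u \<in> Lset t w \<and> y \<in> Rset t w)" using bef_char[OF bs u(1) h(1) u(2)] by blast
    then obtain w where "u \<in> Lset t w" "y \<in> Rset t w" using h by blast
    then have "b < w" "w < y" using L_trans[OF bs] h(4) Lset_lt[OF bs] Rset_gt[OF bs] by blast+
    then show False using h by simp
  next
    case 2
    then have "u \<in> D t y \<or> (\<exists>w. y \<in> Lset t w \<and> u \<in> Rset t w)" using bef_char[OF bs h(1) u(1)] u by metis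
    then show False
    proof
      assume uy: "u \<in> D t y"
      then consider "u \<in> Lset t y" | "u \<in> Rset t y" using D_cases[OF bs uy] u by blast
      then show False
      proof cases
        case 1 then have "b < y" using L_trans[OF bs] h(4) Lset_lt[OF bs] by blast
        then show False using h by simp
      next
        case 2 then have "y < a" using R_trans[OF bs] h(3) Rset_gt[OF bs] by blast
        then show False using h by simp
      qed
    next
      assume "\<exists>w. y \<in> Lset t w \<and> u \<in> Rset t w"
      then obtain w where "y \<in> Lset t w" "u \<in> Rset t w" by blast
      then have "y < w" "w < a" using R_trans[OF bs] h(3) Lset_lt[OF bs] Rset_gt[OF bs] by blast+
      then show False using h by simp
    qed
  qed
qed

lemma contig: "bst t \<Longrightarrow> x \<in> D t w \<Longrightarrow> z \<in> set_tree t \<Longrightarrow> bef t w z \<Longrightarrow> bef t z x \<Longrightarrow> z \<in> D t w"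
proof (rule ccontr)
  assume bs: "bst t" and h: "x \<in> D t w" "z \<in> set_tree t" "bef t w z" "bef t z x" and nz: "z \<notin> D t w"
  have w: "w \<in> set_tree t" "x \<in> set_tree t" using D_in[OF h(1)] by blast+
  have "z \<in> D t w \<or> (\<exists>v. w \<in> Lset t v \<and> z \<in> Rset t v)" using bef_char[OF bs w(1) h(2)] h(3) bef_irrefl by metis
  then obtain v where v: "w \<in> Lset t v" "z \<in> Rset t v" using nz by blast
  have xv: "x \<in> Lset t v" using L_trans[OF bs v(1)] h(1) by blast
  have "x \<in> D t z \<or> (\<exists>v'. z \<in> Lset t v' \<and> x \<in> Rset t v')" using bef_char[OF bs h(2) w(2)] h(4) bef_irrefl by metis
  then show False
  proof
    assume "x \<in> D t z" then have "x \<in> Rset t v" using R_trans[OF bs v(2)] by blast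
    then show False using xv LR_disj[OF bs] by blast
  next
    assume "\<exists>v'. z \<in> Lset t v' \<and> x \<in> Rset t v'"
    then obtain v' where "z \<in> Lset t v'" "x \<in> Rset t v'" by blast
    then have "z < x" using Lset_lt[OF bs] Rset_gt[OF bs] by fastforce
    moreover have "x < z" using xv v(2) Lset_lt[OF bs] Rset_gt[OF bs] by fastforce
    ultimately show False by simp
  qed
qed

lemma lchild_shape: "is_lchild t c p \<Longrightarrow> \<exists>l1 r1 r. subtree t p = Node (Node l1 c r1) p r"
proof -
  assume h: "is_lchild t c p"
  then have p: "p \<in> set_tree t" by (simp add: is_lchild_def)
  obtain l r where s: "subtree t p = Node l p r" using subtree_in[OF p] by blast
  then show ?thesis using h by (cases l) (auto simp: is_lchild_def)
qed

lemma rchild_shape: "is_rchild t c p \<Longrightarrow> \<exists>l l2 r2. subtree t p = Node l p (Node l2 c r2)"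
proof -
  assume h: "is_rchild t c p"
  then have p: "p \<in> set_tree t" by (simp add: is_rchild_def)
  obtain l r where s: "subtree t p = Node l p r" using subtree_in[OF p] by blast
  then show ?thesis using h by (cases r) (auto simp: is_rchild_def)
qed

lemma lchild_D: "bst t \<Longrightarrow> is_lchild t c p \<Longrightarrow> D t c = Lset t p \<and> c \<in> Lset t p"
proof -
  assume b: "bst t" and h: "is_lchild t c p"
  obtain l1 r1 r where s: "subtree t p = Node (Node l1 c r1) p r" using lchild_shape[OF h] by blast
  have bn: "bst (Node (Node l1 c r1) p r)" using bst_subtree[OF b, of p] s by simp
  have cD: "c \<in> D t p" using s by (simp add: D_def)
  have "subtree t c = subtree (Node (Node l1 c r1) p r) c" using subtree_via[OF b cD] s by simp
  also have "\<dots> = Node l1 c r1" using subtree_Node_l[OF bn, of c] by simp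
  finally show ?thesis using s by (simp add: D_def Lset_def)
qed

lemma rchild_D: "bst t \<Longrightarrow> is_rchild t c p \<Longrightarrow> D t c = Rset t p \<and> c \<in> Rset t p"
proof -
  assume b: "bst t" and h: "is_rchild t c p"
  obtain l l2 r2 where s: "subtree t p = Node l p (Node l2 c r2)" using rchild_shape[OF h] by blast
  have bn: "bst (Node l p (Node l2 c r2))" using bst_subtree[OF b, of p] s by simp
  have cD: "c \<in> D t p" using s by (simp add: D_def)
  have "subtree t c = subtree (Node l p (Node l2 c r2)) c" using subtree_via[OF b cD] s by simp
  also have "\<dots> = Node l2 c r2" using subtree_Node_r[OF bn, of c] by simp
  finally show ?thesis using s by (simp add: D_def Rset_def)
qed

lemma lchild_of_L: "x \<in> Lset t p \<Longrightarrow> is_lchild t (value (lsub (subtree t p))) p"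
  using L_in[of x t p] by (auto simp: is_lchild_def Lset_def)

lemma rchild_of_R: "x \<in> Rset t p \<Longrightarrow> is_rchild t (value (rsub (subtree t p))) p"
  using R_in[of x t p] by (auto simp: is_rchild_def Rset_def)

lemma idx_app_in: "z \<in> set A \<Longrightarrow> idx (A @ B) z = idx A z"
  by (simp add: idx_append)
lemma idx_app_out: "z \<notin> set A \<Longrightarrow> idx (A @ B) z = length A + idx B z"
  by (simp add: idx_append)

lemma lchild_idx: "bst t \<Longrightarrow> is_lchild t c p \<Longrightarrow> idx (preorder t) c = Suc (idx (preorder t) p)"
proof -
  assume b: "bst t" and h: "is_lchild t c p"
  obtain l1 r1 r where s: "subtree t p = Node (Node l1 c r1) p r" using lchild_shape[OF h] by blast
  obtain us vs where e: "preorder t = us @ p # c # preorder l1 @ preorder r1 @ preorder r @ vs"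
    using layout[OF b s] by auto
  have d: "distinct (us @ p # c # preorder l1 @ preorder r1 @ preorder r @ vs)" using bst_distinct[OF b] e by simp
  then have "p \<notin> set us" "c \<notin> set us" "c \<noteq> p" by auto
  then show ?thesis unfolding e by (simp add: idx_app_out)
qed

lemma lchild_nothing_between: "bst t \<Longrightarrow> is_lchild t c p \<Longrightarrow> bef t p y \<Longrightarrow> bef t y c \<Longrightarrow> False"
  using lchild_idx unfolding bef_def by fastforce

lemma rchild_before: "bst t \<Longrightarrow> is_rchild t c x \<Longrightarrow> z \<in> set_tree t \<Longrightarrow> bef t z c \<Longrightarrow>
   z = x \<or> z \<in> Lset t x \<or> bef t z x"
proof -
  assume b: "bst t" and h: "is_rchild t c x" and z: "z \<in> set_tree t" "bef t z c"
  obtain l l2 r2 where s: "subtree t x = Node l x (Node l2 c r2)" using rchild_shape[OF h] by blast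
  define rest where "rest = preorder l2 @ preorder r2"
  obtain us vs where e: "preorder t = us @ x # preorder l @ c # rest @ vs"
    using layout[OF b s] by (auto simp: rest_def)
  have d: "distinct (us @ x # preorder l @ c # rest @ vs)" using bst_distinct[OF b] e by simp
  then have n: "x \<notin> set us" "c \<notin> set us" "c \<noteq> x" "c \<notin> set (preorder l)" by auto
  have ic: "idx (preorder t) c = length us + Suc (length (preorder l))"
    unfolding e using n by (simp add: idx_app_out)
  have ix: "idx (preorder t) x = length us"
    unfolding e using n by (simp add: idx_app_out)
  have Lx: "Lset t x = set_tree l" using s by (simp add: Lset_def)
  have zi: "idx (preorder t) z < length us + Suc (length (preorder l))" using z(2) ic by (simp add: bef_def)
  show ?thesis
  proof (cases "z \<in> set us")
    case True
    then have "idx (preorder t) z < length us" unfolding e by (simp add: idx_app_in idx_lt)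
    then show ?thesis using ix by (simp add: bef_def)
  next
    case False
    show ?thesis
    proof (cases "z = x")
      case True then show ?thesis by simp
    next
      case F2: False
      show ?thesis
      proof (cases "z \<in> set (preorder l)")
        case True then show ?thesis using Lx by simp
      next
        case F3: False
        have "idx (preorder t) z = length us + Suc (length (preorder l) + idx (c # rest @ vs) z)"
          unfolding e using False F2 F3 by (simp add: idx_app_out)
        then show ?thesis using zi by simp
      qed
    qed
  qed
qed

lemma rchild_between: "bst t \<Longrightarrow> is_rchild t c x \<Longrightarrow> y \<in> set_tree t \<Longrightarrow> bef t x y \<Longrightarrow> bef t y c \<Longrightarrow> y \<in> Lset t x"
  using rchild_before bef_asym bef_irrefl by metis

lemma D_root: "t \<noteq> Leaf \<Longrightarrow> D t (value t) = set_tree t"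
  by (cases t) (auto simp: D_def)

lemma chain: "bst t \<Longrightarrow> c \<in> D t p \<Longrightarrow> c \<in> D t p' \<Longrightarrow> p \<in> D t p' \<or> p' \<in> D t p"
proof -
  assume b: "bst t" and h: "c \<in> D t p" "c \<in> D t p'"
  have pp: "p \<in> set_tree t" "p' \<in> set_tree t" using D_in h by metis+
  show ?thesis
  proof (cases "p = p'")
    case True then show ?thesis using self_D pp by metis
  next
    case False
    then consider "bef t p p'" | "bef t p' p" using bef_total pp by metis
    then show ?thesis
    proof cases
      case 1
      then have "p' \<in> D t p \<or> (\<exists>w. p \<in> Lset t w \<and> p' \<in> Rset t w)" using bef_char[OF b pp False] by blast
      then show ?thesis using L_trans[OF b] R_trans[OF b] h LR_disj[OF b] by blast
    next
      case 2
      then have "p \<in> D t p' \<or> (\<exists>w. p' \<in> Lset t w \<and> p \<in> Rset t w)" using bef_char[OF b pp(2,1)] False by metis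
      then show ?thesis using L_trans[OF b] R_trans[OF b] h LR_disj[OF b] by blast
    qed
  qed
qed

definition is_child :: "'a tree \<Rightarrow> 'a \<Rightarrow> 'a \<Rightarrow> bool" where
  "is_child t c p \<longleftrightarrow> is_lchild t c p \<or> is_rchild t c p"

lemma child_facts: "bst t \<Longrightarrow> is_child t c p \<Longrightarrow> c \<in> D t p \<and> c \<noteq> p \<and> p \<notin> D t c \<and>
   (\<forall>z \<in> D t p. z = p \<or> z \<in> D t c \<or> c \<notin> D t z)"
proof -
  assume b: "bst t" and h: "is_child t c p"
  have p: "p \<in> set_tree t" using h by (auto simp: is_child_def is_lchild_def is_rchild_def)
  from h show ?thesis unfolding is_child_def
  proof
    assume l: "is_lchild t c p"
    have e: "D t c = Lset t p" "c \<in> Lset t p" using lchild_D[OF b l] by auto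
    have "\<forall>z \<in> D t p. z = p \<or> z \<in> D t c \<or> c \<notin> D t z"
    proof
      fix z assume z: "z \<in> D t p"
      show "z = p \<or> z \<in> D t c \<or> c \<notin> D t z"
        using D_cases[OF b z] e R_trans[OF b] LR_disj[OF b] by blast
    qed
    then show ?thesis using e Lset_D Lset_lt[OF b] by fastforce
  next
    assume l: "is_rchild t c p"
    have e: "D t c = Rset t p" "c \<in> Rset t p" using rchild_D[OF b l] by auto
    have "\<forall>z \<in> D t p. z = p \<or> z \<in> D t c \<or> c \<notin> D t z"
    proof
      fix z assume z: "z \<in> D t p"
      show "z = p \<or> z \<in> D t c \<or> c \<notin> D t z"
        using D_cases[OF b z] e L_trans[OF b] LR_disj[OF b] by blast
    qed
    then show ?thesis using e Rset_D Rset_gt[OF b] by fastforce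
  qed
qed

lemma parent_unique: "bst t \<Longrightarrow> is_child t c p \<Longrightarrow> is_child t c p' \<Longrightarrow> p = p'"
proof -
  assume b: "bst t" and h: "is_child t c p" "is_child t c p'"
  note f1 = child_facts[OF b h(1)] and f2 = child_facts[OF b h(2)]
  have "p \<in> D t p' \<or> p' \<in> D t p" using chain[OF b] f1 f2 by blast
  then show ?thesis
  proof
    assume a: "p \<in> D t p'"
    then have "p = p' \<or> p \<in> D t c \<or> c \<notin> D t p" using f2 by blast
    then show ?thesis using f1 by blast
  next
    assume a: "p' \<in> D t p"
    then have "p' = p \<or> p' \<in> D t c \<or> c \<notin> D t p'" using f1 by blast
    then show ?thesis using f2 by blast
  qed
qed

lemma parent_eq: "bst t \<Longrightarrow> is_child t c p \<Longrightarrow> parent t c = p"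
  unfolding parent_def using parent_unique is_child_def by (metis (no_types, lifting) the_equality)

lemma child_not_root: "bst t \<Longrightarrow> is_child t c p \<Longrightarrow> c \<noteq> value t"
proof
  assume b: "bst t" and h: "is_child t c p" and c: "c = value t"
  note f = child_facts[OF b h]
  have "t \<noteq> Leaf" using f D_in by fastforce
  then have "p \<in> D t c" using D_root c D_in f by metis
  then show False using f by blast
qed

lemma lchild_lift_l: "bst (Node l a r) \<Longrightarrow> is_lchild l c p \<Longrightarrow> is_lchild (Node l a r) c p"
  using L_in[of _ l p] subtree_Node_l by (fastforce simp: is_lchild_def)
lemma rchild_lift_l: "bst (Node l a r) \<Longrightarrow> is_rchild l c p \<Longrightarrow> is_rchild (Node l a r) c p"
  using subtree_Node_l by (fastforce simp: is_rchild_def)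
lemma lchild_lift_r: "bst (Node l a r) \<Longrightarrow> is_lchild r c p \<Longrightarrow> is_lchild (Node l a r) c p"
  using subtree_Node_r by (fastforce simp: is_lchild_def)
lemma rchild_lift_r: "bst (Node l a r) \<Longrightarrow> is_rchild r c p \<Longrightarrow> is_rchild (Node l a r) c p"
  using subtree_Node_r by (fastforce simp: is_rchild_def)

lemma has_parent: "bst t \<Longrightarrow> i \<in> set_tree t \<Longrightarrow> i \<noteq> value t \<Longrightarrow> \<exists>p. is_child t i p"
proof (induction t)
  case Leaf then show ?case by simp
next
  case (Node l a r)
  note b = Node.prems(1)
  consider "i \<in> set_tree l" | "i \<in> set_tree r" using Node.prems by auto
  then show ?case
  proof cases
    case 1
    show ?thesis
    proof (cases "i = value l")
      case True
      then have "is_lchild (Node l a r) i a" using 1 by (cases l) (auto simp: is_lchild_def)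
      then show ?thesis unfolding is_child_def by blast
    next
      case False
      then obtain p where "is_child l i p" using Node.IH(1) 1 b by auto
      then show ?thesis unfolding is_child_def using lchild_lift_l[OF b] rchild_lift_l[OF b] by blast
    qed
  next
    case 2
    show ?thesis
    proof (cases "i = value r")
      case True
      then have "is_rchild (Node l a r) i a" using 2 by (cases r) (auto simp: is_rchild_def)
      then show ?thesis unfolding is_child_def by blast
    next
      case False
      then obtain p where "is_child r i p" using Node.IH(2) 2 b by auto
      then show ?thesis unfolding is_child_def using lchild_lift_r[OF b] rchild_lift_r[OF b] by blast
    qed
  qed
qed

lemma desc_induct0:
  assumes tr: "\<And>a b c. Q a b \<Longrightarrow> Q b c \<Longrightarrow> Q a c"
  shows "bst t \<Longrightarrow> (\<And>c p. is_child t c p \<Longrightarrow> Q c p) \<Longrightarrow> (\<And>x. x \<in> set_tree t \<Longrightarrow> Q x x) \<Longrightarrow>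
    a \<in> D t x \<Longrightarrow> Q a x"
proof (induction t arbitrary: a x)
  case Leaf then show ?case by (simp add: D_def)
next
  case (Node l v r)
  note b = Node.prems(1)
  have bl: "bst l" "bst r" using b by auto
  have el: "\<And>c p. is_child l c p \<Longrightarrow> Q c p"
    using Node.prems(2) lchild_lift_l[OF b] rchild_lift_l[OF b] unfolding is_child_def by blast
  have er: "\<And>c p. is_child r c p \<Longrightarrow> Q c p"
    using Node.prems(2) lchild_lift_r[OF b] rchild_lift_r[OF b] unfolding is_child_def by blast
  have rl: "\<And>x. x \<in> set_tree l \<Longrightarrow> Q x x" "\<And>x. x \<in> set_tree r \<Longrightarrow> Q x x" using Node.prems(3) by auto
  have x: "x \<in> set_tree (Node l v r)" using D_in Node.prems(4) by metis
  then consider "x = v" | "x \<in> set_tree l" | "x \<in> set_tree r" by auto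
  then show ?case
  proof cases
    case 1
    then have "a \<in> set_tree (Node l v r)" using Node.prems(4) by (simp add: D_def)
    then consider "a = v" | "a \<in> set_tree l" | "a \<in> set_tree r" by auto
    then show ?thesis
    proof cases
      case 1 then show ?thesis using Node.prems(3) x \<open>x = v\<close> by simp
    next
      case 2
      then have ln: "l \<noteq> Leaf" by auto
      have "a \<in> D l (value l)" using D_root[OF ln] 2 by simp
      then have "Q a (value l)" using Node.IH(1)[OF bl(1) el rl(1)] by blast
      moreover have "is_lchild (Node l v r) (value l) v" using ln by (cases l) (auto simp: is_lchild_def)
      ultimately show ?thesis using Node.prems(2) tr \<open>x = v\<close> unfolding is_child_def by blast
    next
      case 3
      then have ln: "r \<noteq> Leaf" by auto
      have "a \<in> D r (value r)" using D_root[OF ln] 3 by simp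
      then have "Q a (value r)" using Node.IH(2)[OF bl(2) er rl(2)] by blast
      moreover have "is_rchild (Node l v r) (value r) v" using ln by (cases r) (auto simp: is_rchild_def)
      ultimately show ?thesis using Node.prems(2) tr \<open>x = v\<close> unfolding is_child_def by blast
    qed
  next
    case 2
    then have "a \<in> D l x" using Node.prems(4) D_Node_l[OF b 2] by simp
    then show ?thesis using Node.IH(1)[OF bl(1) el rl(1)] by blast
  next
    case 3
    then have "a \<in> D r x" using Node.prems(4) D_Node_r[OF b 3] by simp
    then show ?thesis using Node.IH(2)[OF bl(2) er rl(2)] by blast
  qed
qed

lemma desc_induct:
  assumes "bst t" "\<And>c p. is_child t c p \<Longrightarrow> Q c p" "\<And>x. x \<in> set_tree t \<Longrightarrow> Q x x"
    "\<And>a b c. Q a b \<Longrightarrow> Q b c \<Longrightarrow> Q a c" "a \<in> D t x"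
  shows "Q a x"
  using desc_induct0[of Q t a x] assms by blast

lemma rspine_sub: "set (rspine s) \<subseteq> set_tree s"
  by (induction s) auto

lemma spine_or_left: "bst s \<Longrightarrow> i \<in> set_tree s \<Longrightarrow> i \<in> set (rspine s) \<or> (\<exists>u \<in> set_tree s. i \<in> Lset s u)"
proof (induction s)
  case Leaf then show ?case by simp
next
  case (Node l a r)
  note b = Node.prems(1)
  consider "i = a" | "i \<in> set_tree l" | "i \<in> set_tree r" using Node.prems by auto
  then show ?case
  proof cases
    case 1 then show ?thesis by simp
  next
    case 2
    have "i \<in> Lset (Node l a r) a" using 2 L_Node_a[of l a r] by simp
    then show ?thesis by auto
  next
    case 3
    have br: "bst r" using b by simp
    have "i \<in> set (rspine r) \<or> (\<exists>u \<in> set_tree r. i \<in> Lset r u)" using Node.IH(2)[OF br 3] .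
    then show ?thesis
    proof
      assume "i \<in> set (rspine r)" then show ?thesis by simp
    next
      assume "\<exists>u \<in> set_tree r. i \<in> Lset r u"
      then obtain u where u: "u \<in> set_tree r" "i \<in> Lset r u" by blast
      then have "i \<in> Lset (Node l a r) u" using L_Node_r[OF b u(1)] by simp
      then show ?thesis using u(1) by auto
    qed
  qed
qed

lemma spine_butlast: "bst s \<Longrightarrow> i \<in> set (rspine s) \<Longrightarrow> Rset s i \<noteq> {} \<Longrightarrow> i \<in> set (butlast (rspine s))"
proof (induction s)
  case Leaf then show ?case by simp
next
  case (Node l a r)
  note b = Node.prems(1)
  have br: "bst r" using b by simp
  show ?case
  proof (cases "i = a")
    case True
    have "Rset (Node l a r) a = set_tree r" by (rule R_Node_a)
    then have "set_tree r \<noteq> {}" using Node.prems(3) True by simp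
    then have "rspine r \<noteq> []" by (cases r) auto
    then show ?thesis using True by simp
  next
    case False
    then have ir: "i \<in> set (rspine r)" using Node.prems(2) by simp
    then have ir2: "i \<in> set_tree r" using rspine_sub by fast
    have "Rset (Node l a r) i = Rset r i" using R_Node_r[OF b ir2] .
    then have "Rset r i \<noteq> {}" using Node.prems(3) by simp
    then have "i \<in> set (butlast (rspine r))" using Node.IH(2)[OF br ir] by simp
    moreover have "rspine r \<noteq> []" using ir by auto
    ultimately show ?thesis by simp
  qed
qed

lemma butlast_spine: "bst s \<Longrightarrow> j \<in> set (butlast (rspine s)) \<Longrightarrow> j \<in> set_tree s \<and> Rset s j \<noteq> {}"
proof (induction s)
  case Leaf then show ?case by simp
next
  case (Node l a r)
  note b = Node.prems(1)
  show ?case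
  proof (cases "r = Leaf")
    case True then show ?thesis using Node.prems by simp
  next
    case False
    then have ne: "rspine r \<noteq> []" by (cases r) auto
    then have "j = a \<or> j \<in> set (butlast (rspine r))" using Node.prems by simp
    then show ?thesis
    proof
      assume ja: "j = a"
      have "set_tree r \<noteq> {}" using False by (cases r) auto
      then show ?thesis using ja R_Node_a[of l a r] by simp
    next
      assume "j \<in> set (butlast (rspine r))"
      then have jr: "j \<in> set_tree r \<and> Rset r j \<noteq> {}" using Node.IH(2) b by simp
      then have "Rset (Node l a r) j = Rset r j" using R_Node_r[OF b] by blast
      then show ?thesis using jr by simp
    qed
  qed
qed

lemma L_sub_tr: "bst t \<Longrightarrow> u \<in> D t x \<Longrightarrow> Lset (subtree t x) u = Lset t u"
proof -
  assume b: "bst t" and u: "u \<in> D t x"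
  show ?thesis unfolding Lset_def using subtree_via[OF b u] by simp
qed
lemma R_sub_tr: "bst t \<Longrightarrow> u \<in> D t x \<Longrightarrow> Rset (subtree t x) u = Rset t u"
proof -
  assume b: "bst t" and u: "u \<in> D t x"
  show ?thesis unfolding Rset_def using subtree_via[OF b u] by simp
qed

lemma spine_left_P: "bst t \<Longrightarrow> i \<in> D t m \<Longrightarrow> i \<in> set (rspine (subtree t m)) \<or> (\<exists>u \<in> D t m. i \<in> Lset t u)"
proof -
  assume b: "bst t" and i: "i \<in> D t m"
  have "i \<in> set (rspine (subtree t m)) \<or> (\<exists>u \<in> set_tree (subtree t m). i \<in> Lset (subtree t m) u)"
    using spine_or_left[OF bst_subtree[OF b]] i unfolding D_def by blast
  moreover have "\<And>u. u \<in> D t m \<Longrightarrow> Lset (subtree t m) u = Lset t u" using L_sub_tr[OF b] by blast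
  ultimately show ?thesis unfolding D_def by auto
qed

lemma spine_butlast_P: "bst t \<Longrightarrow> i \<in> set (rspine (subtree t m)) \<Longrightarrow> Rset t i \<noteq> {} \<Longrightarrow> i \<in> BR_minus t m"
proof -
  assume b: "bst t" and i: "i \<in> set (rspine (subtree t m))" and R: "Rset t i \<noteq> {}"
  have iD: "i \<in> D t m" using i rspine_sub unfolding D_def by fast
  have "Rset (subtree t m) i \<noteq> {}" using R_sub_tr[OF b iD] R by simp
  then show ?thesis unfolding BR_minus_def using spine_butlast[OF bst_subtree[OF b] i] by blast
qed

lemma BR_minus_facts: "bst t \<Longrightarrow> j \<in> BR_minus t m \<Longrightarrow> j \<in> D t m \<and> Rset t j \<noteq> {}"
proof -
  assume b: "bst t" and j: "j \<in> BR_minus t m"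
  have "j \<in> set_tree (subtree t m) \<and> Rset (subtree t m) j \<noteq> {}"
    using butlast_spine[OF bst_subtree[OF b]] j unfolding BR_minus_def by blast
  then show ?thesis using R_sub_tr[OF b] unfolding D_def by auto
qed

lemma lab_interval: "bst t \<Longrightarrow> set_tree t = {1..k} \<Longrightarrow> a \<in> D t u \<Longrightarrow> b \<in> D t u \<Longrightarrow> a \<le> q \<Longrightarrow> q \<le> (b::nat) \<Longrightarrow> q \<in> D t u"
proof (rule ccontr)
  assume bs: "bst t" and s: "set_tree t = {1..k}" and h: "a \<in> D t u" "b \<in> D t u" "a \<le> q" "q \<le> b" and n: "q \<notin> D t u"
  have "a \<in> set_tree t" "b \<in> set_tree t" using D_in[OF h(1)] D_in[OF h(2)] by simp_all
  then have "1 \<le> a" "b \<le> k" using s by auto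
  then have q: "q \<in> set_tree t" using s h(3,4) by auto
  have "q \<noteq> a" "q \<noteq> b" using h(1,2) n by auto
  then have "a < q" "q < b" using h(3,4) by auto
  then show False using interval[OF bs q n h(1,2)] by blast
qed

definition SC :: "nat tree \<Rightarrow> (nat \<Rightarrow> bool) \<Rightarrow> (nat \<times> nat) set" where
  "SC P e = {(i, j). i \<in> set_tree P \<and> (j \<in> BR_minus P i \<or>
      (i \<noteq> value P \<and> e i \<and> (j = Min (D P i) - 1 \<or> j = Max (D P i))))}"

definition col :: "nat tree \<Rightarrow> nat tree \<Rightarrow> (nat \<Rightarrow> nat) \<Rightarrow> nat \<Rightarrow> nat \<Rightarrow> bool" where
  "col T P g i y \<longleftrightarrow> bef T y (g i) \<and> (\<forall>a \<in> set_tree P. bef P a i \<longrightarrow> bef T (g a) y)"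

definition valbox :: "nat tree \<Rightarrow> (nat \<Rightarrow> nat) \<Rightarrow> nat \<Rightarrow> nat \<Rightarrow> bool" where
  "valbox P g j y \<longleftrightarrow> (j \<in> set_tree P \<longrightarrow> g j < y) \<and> (Suc j \<in> set_tree P \<longrightarrow> y < g (Suc j))"

definition occ :: "nat tree \<Rightarrow> nat tree \<Rightarrow> (nat \<Rightarrow> bool) \<Rightarrow> (nat \<Rightarrow> nat) \<Rightarrow> bool" where
  "occ T P e g \<longleftrightarrow> (\<forall>a \<in> set_tree P. g a \<in> set_tree T) \<and>
     (\<forall>a \<in> set_tree P. \<forall>b \<in> set_tree P. a < b \<longleftrightarrow> g a < g b) \<and>
     (\<forall>a \<in> set_tree P. \<forall>b \<in> set_tree P. bef P a b \<longleftrightarrow> bef T (g a) (g b)) \<and>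
     (\<forall>(i, j) \<in> SC P e. \<forall>y \<in> set_tree T. col T P g i y \<longrightarrow> \<not> valbox P g j y)"

lemma LD: "y \<in> Lset t x \<Longrightarrow> y \<in> D t x" using Lset_D by fast
lemma RD: "y \<in> Rset t x \<Longrightarrow> y \<in> D t x" using Rset_D by fast
lemma LtD: "bst t \<Longrightarrow> y \<in> Lset t x \<Longrightarrow> z \<in> D t y \<Longrightarrow> z \<in> Lset t x" using L_trans by fast
lemma RtD: "bst t \<Longrightarrow> y \<in> Rset t x \<Longrightarrow> z \<in> D t y \<Longrightarrow> z \<in> Rset t x" using R_trans by fast
lemma DtD: "bst t \<Longrightarrow> y \<in> D t x \<Longrightarrow> z \<in> D t y \<Longrightarrow> z \<in> D t x" using D_trans by fast

context
  fixes T P :: "nat tree" and e :: "nat \<Rightarrow> bool" and g :: "nat \<Rightarrow> nat" and k :: nat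
  assumes bT: "bst T" and bP: "bst P" and sP: "set_tree P = {1..k}" and og: "occ T P e g"
begin

lemma g_in: "a \<in> set_tree P \<Longrightarrow> g a \<in> set_tree T"
  using og unfolding occ_def by blast
lemma g_mono: "a \<in> set_tree P \<Longrightarrow> b \<in> set_tree P \<Longrightarrow> a < b \<longleftrightarrow> g a < g b"
  using og unfolding occ_def by blast
lemma g_bef: "a \<in> set_tree P \<Longrightarrow> b \<in> set_tree P \<Longrightarrow> bef P a b \<longleftrightarrow> bef T (g a) (g b)"
  using og unfolding occ_def by blast
lemma g_shade: "(i, j) \<in> SC P e \<Longrightarrow> y \<in> set_tree T \<Longrightarrow> col T P g i y \<Longrightarrow> valbox P g j y \<Longrightarrow> False"
  using og unfolding occ_def by blast

lemma g_inj: "a \<in> set_tree P \<Longrightarrow> b \<in> set_tree P \<Longrightarrow> g a = g b \<Longrightarrow> a = b"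
  using g_mono by (metis less_irrefl nat_neq_iff)

lemma c1: "a \<in> Lset P i \<Longrightarrow> g a \<in> Lset T (g i)"
proof -
  assume a: "a \<in> Lset P i"
  have ai: "a \<in> set_tree P" "i \<in> set_tree P" using L_in[OF a] by auto
  have ali: "a < i" using Lset_lt[OF bP a] .
  then have gl: "g a < g i" using g_mono[OF ai] by simp
  have aD: "a \<in> D P i" using a Lset_D[of P i] by (rule subsetD[rotated])
  have "bef P i a" using bef_D[OF bP aD] ali by simp
  then have "bef T (g i) (g a)" using g_bef[OF ai(2,1)] by simp
  then show ?thesis using bef_L[OF bT g_in[OF ai(2)] g_in[OF ai(1)]] gl by simp
qed

lemma c2: assumes r: "is_rchild P j i" shows "g j \<in> Rset T (g i)"
proof (rule ccontr)
  assume nR: "g j \<notin> Rset T (g i)"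
  have jR: "j \<in> Rset P i" "D P j = Rset P i" using rchild_D[OF bP r] by auto
  have iP: "i \<in> set_tree P" "j \<in> set_tree P" using R_in[OF jR(1)] by auto
  have ij: "i < j" using Rset_gt[OF bP jR(1)] .
  have gij: "g i < g j" using g_mono[OF iP] ij by simp
  have iD: "i \<in> D P i" using self_D[OF iP(1)] .
  have jD: "j \<in> D P i" using RD[OF jR(1)] .
  have "bef P i j" using bef_D[OF bP jD] ij by simp
  then have bgij: "bef T (g i) (g j)" using g_bef[OF iP] by simp
  have gin: "g i \<in> set_tree T" "g j \<in> set_tree T" using g_in iP by auto
  have gne: "g i \<noteq> g j" using gij by simp
  have "g j \<in> D T (g i) \<or> (\<exists>w. g i \<in> Lset T w \<and> g j \<in> Rset T w)"
    using bef_char[OF bT gin gne] bgij by simp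
  moreover have "g j \<notin> D T (g i)" using nR Rset_iff[OF bT] gij by simp
  ultimately obtain w where wL: "g i \<in> Lset T w" and wR: "g j \<in> Rset T w" by blast
  have wT: "w \<in> set_tree T" using L_in[OF wL] by simp
  have giw: "g i < w" using Lset_lt[OF bT wL] .
  have wgj: "w < g j" using Rset_gt[OF bT wR] .
  have between: "a \<in> Lset P j" if "i < a" "a < j" for a
  proof -
    have "a \<in> D P i" using lab_interval[OF bP sP iD jD] that by simp
    then have "a \<in> Rset P i" using Rset_iff[OF bP] that by simp
    then show ?thesis using Lset_iff[OF bP] jR(2) that by simp
  qed
  have notimg: "g a \<noteq> w" if aP: "a \<in> set_tree P" for a
  proof
    assume ga: "g a = w"
    have "i < a" "a < j" using g_mono[OF iP(1) aP] g_mono[OF aP iP(2)] giw wgj ga by auto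
    then have "g a \<in> Lset T (g j)" using c1 between by simp
    then have "g a \<in> Rset T w" using RtD[OF bT wR LD] by simp
    then show False using Rset_gt[OF bT] ga by fastforce
  qed
  define S where "S = {a \<in> set_tree P. bef T w (g a)}"
  have "bef T w (g i)" using bef_D[OF bT LD[OF wL]] giw by simp
  then have iS: "i \<in> S" using iP S_def by simp
  obtain m where mS: "m \<in> S" and mmin: "\<And>a. a \<in> S \<Longrightarrow> idx (preorder P) m \<le> idx (preorder P) a"
    using ex_has_least_nat[of "\<lambda>a. a \<in> S" i "idx (preorder P)"] iS by blast
  have mP: "m \<in> set_tree P" and bwm: "bef T w (g m)" using mS S_def by auto
  have nb: "\<not> bef P a m" if "a \<in> S" for a using mmin[OF that] by (simp add: bef_def)
  have colm: "col T P g m w"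
    unfolding col_def
  proof (intro conjI ballI impI)
    show "bef T w (g m)" by (rule bwm)
  next
    fix a assume aP: "a \<in> set_tree P" and ba: "bef P a m"
    then have "a \<notin> S" using nb by blast
    then have "\<not> bef T w (g a)" using aP S_def by simp
    then show "bef T (g a) w" using bef_total[OF g_in[OF aP] wT] notimg[OF aP] by simp
  qed
  have vb: "valbox P g i w"
    unfolding valbox_def
  proof (intro conjI impI)
    show "g i < w" by (rule giw)
  next
    assume sP': "Suc i \<in> set_tree P"
    show "w < g (Suc i)"
    proof (cases "Suc i = j")
      case True then show ?thesis using wgj by simp
    next
      case False
      then have "Suc i < j" using ij by simp
      then have "Suc i \<in> Lset P j" using between by simp
      then have "g (Suc i) \<in> Lset T (g j)" using c1 by simp
      then have "g (Suc i) \<in> Rset T w" using RtD[OF bT wR LD] by simp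
      then show ?thesis using Rset_gt[OF bT] by simp
    qed
  qed
  have spine: "i \<in> set (rspine (subtree P m))"
  proof (cases "m = i")
    case True
    obtain l r where "subtree P i = Node l i r" using subtree_in[OF iP(1)] by blast
    then show ?thesis using True by simp
  next
    case False
    have "\<not> bef P i m" using nb iS by simp
    then have bmi: "bef P m i" using bef_total[OF mP iP(1) False] by simp
    then have "i \<in> D P m \<or> (\<exists>u. m \<in> Lset P u \<and> i \<in> Rset P u)" using bef_char[OF bP mP iP(1) False] by simp
    then show ?thesis
    proof
      assume "\<exists>u. m \<in> Lset P u \<and> i \<in> Rset P u"
      then obtain u where u: "m \<in> Lset P u" "i \<in> Rset P u" by blast
      have uP: "u \<in> set_tree P" using L_in[OF u(1)] by simp
      have mu: "m < u" using Lset_lt[OF bP u(1)] .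
      have ui: "u < i" using Rset_gt[OF bP u(2)] .
      have "bef P u m" using bef_D[OF bP LD[OF u(1)]] mu by simp
      then have "u \<notin> S" using nb by blast
      then have "\<not> bef T w (g u)" using uP S_def by simp
      then have bgu: "bef T (g u) w" using bef_total[OF g_in[OF uP] wT] notimg[OF uP] by simp
      have "g m < g u" using g_mono[OF mP uP] mu by simp
      moreover have "g u < g i" using g_mono[OF uP iP(1)] ui by simp
      ultimately show ?thesis using no231[OF bT g_in[OF mP] bgu bwm] giw by simp
    next
      assume iDm: "i \<in> D P m"
      have "i \<in> set (rspine (subtree P m)) \<or> (\<exists>u \<in> D P m. i \<in> Lset P u)" using spine_left_P[OF bP iDm] .
      moreover have False if u: "u \<in> D P m" "i \<in> Lset P u" for u
      proof -
        have uP: "u \<in> set_tree P" using L_in[OF u(2)] by simp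
        have "j \<in> Lset P u" using LtD[OF bP u(2) jD] .
        then have gj: "g j \<in> Lset T (g u)" using c1 by simp
        have bwu: "bef T w (g u)"
        proof (cases "u = m")
          case True then show ?thesis using bwm by simp
        next
          case False
          then have "bef P m u" using bef_D[OF bP u(1)] by simp
          then have "bef T (g m) (g u)" using g_bef[OF mP uP] by simp
          then show ?thesis using bef_trans[OF bwm] by simp
        qed
        have "bef P u i" using bef_D[OF bP LD[OF u(2)]] Lset_lt[OF bP u(2)] by simp
        then have bui: "bef T (g u) (g i)" using g_bef[OF uP iP(1)] by simp
        have giD: "g i \<in> D T w" using LD[OF wL] .
        have guD: "g u \<in> D T w" using contig[OF bT giD g_in[OF uP] bwu bui] .
        consider "g u \<in> Lset T w" | "g u \<in> Rset T w" using D_cases[OF bT guD] notimg[OF uP] by blast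
        then show False
        proof cases
          case 1
          then have "g j \<in> Lset T w" using LtD[OF bT 1 LD[OF gj]] by simp
          then show False using LR_disj[OF bT] wR by blast
        next
          case 2
          then have "bef T (g i) (g u)" using bef_split[OF bT wL] by simp
          then show False using bef_asym[OF bui] by simp
        qed
      qed
      ultimately show ?thesis by blast
    qed
  qed
  have "Rset P i \<noteq> {}" using jR by blast
  then have "i \<in> BR_minus P m" using spine_butlast_P[OF bP spine] by simp
  then have "(m, i) \<in> SC P e" using mP unfolding SC_def by simp
  then show False using g_shade[OF _ wT colm vb] by simp
qed

lemma c3: "a \<in> D P i \<Longrightarrow> g a \<in> D T (g i)"
proof -
  assume a: "a \<in> D P i"
  show ?thesis
  proof (rule desc_induct[OF bP, of "\<lambda>a x. g a \<in> D T (g x)"])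
    fix c p assume cp: "is_child P c p"
    show "g c \<in> D T (g p)"
    proof (cases "is_lchild P c p")
      case True
      then have "c \<in> Lset P p" using lchild_D[OF bP] by simp
      then show ?thesis using LD[OF c1] by simp
    next
      case False
      then have "is_rchild P c p" using cp unfolding is_child_def by simp
      then show ?thesis using RD[OF c2] by simp
    qed
  next
    fix x assume "x \<in> set_tree P" then show "g x \<in> D T (g x)" using self_D[OF g_in] by simp
  next
    fix a b c assume "g a \<in> D T (g b)" "g b \<in> D T (g c)" then show "g a \<in> D T (g c)"
      using DtD[OF bT] by simp
  qed (rule a)
qed

lemma DP_fin: "finite (D P i)" using finite_subset[OF D_sub] by (metis finite_set_tree)

lemma c4: assumes l: "is_lchild P i p" and ei: "e i" shows "is_lchild T (g i) (g p)"
proof -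
  have DiL: "D P i = Lset P p" and iL: "i \<in> Lset P p" using lchild_D[OF bP l] by auto
  have iP: "i \<in> set_tree P" "p \<in> set_tree P" using L_in[OF iL] by auto
  have giL: "g i \<in> Lset T (g p)" using c1[OF iL] .
  define y where "y = value (lsub (subtree T (g p)))"
  have yc: "is_lchild T y (g p)" using lchild_of_L[OF giL] unfolding y_def .
  have Dy: "D T y = Lset T (g p)" and yL: "y \<in> Lset T (g p)" using lchild_D[OF bT yc] by auto
  show ?thesis
  proof (rule ccontr)
    assume ne: "\<not> ?thesis"
    then have giy: "g i \<noteq> y" using yc by auto
    have giDy: "g i \<in> D T y" using Dy giL by simp
    have yT: "y \<in> set_tree T" using L_in[OF yL] by simp
    have byi: "bef T y (g i)" using bef_D[OF bT giDy] giy by simp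
    have ypne: "y \<noteq> g p" using Lset_lt[OF bT yL] by simp
    have bpy: "bef T (g p) y" using bef_D[OF bT LD[OF yL] ypne] .
    have colv: "col T P g i y"
      unfolding col_def
    proof (intro conjI ballI impI)
      show "bef T y (g i)" by (rule byi)
    next
      fix a assume aP: "a \<in> set_tree P" and ba: "bef P a i"
      have "idx (preorder P) a < Suc (idx (preorder P) p)" using ba lchild_idx[OF bP l] by (simp add: bef_def)
      then have "idx (preorder P) a = idx (preorder P) p \<or> bef P a p" by (auto simp: bef_def)
      then show "bef T (g a) y"
      proof
        assume "idx (preorder P) a = idx (preorder P) p"
        then have "a = p" using idx_inj[of a "preorder P" p] aP iP by simp
        then show ?thesis using bpy by simp
      next
        assume "bef P a p"
        then have "bef T (g a) (g p)" using g_bef[OF aP iP(2)] by simp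
        then show ?thesis using bef_trans[OF _ bpy] by simp
      qed
    qed
    have ine: "i \<noteq> value P" using child_not_root[OF bP] l unfolding is_child_def by blast
    have fin: "finite (D P i)" by (rule DP_fin)
    have iDi: "i \<in> D P i" using self_D[OF iP(1)] .
    consider "g i \<in> Lset T y" | "g i \<in> Rset T y" using D_cases[OF bT giDy] giy by blast
    then show False
    proof cases
      case 1
      define M where "M = Max (D P i)"
      have MD: "M \<in> D P i" unfolding M_def using Max_in[OF fin] iDi by blast
      have MP: "M \<in> set_tree P" using D_in[OF MD] by simp
      have gMy: "g M < y" using Lset_lt[OF bT LtD[OF bT 1 c3[OF MD]]] .
      have Mp: "M < p" using Lset_lt[OF bP] MD DiL by simp
      have p1: "1 \<le> p" using iP sP by auto
      have ip: "i < p" using Lset_lt[OF bP iL] .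
      have "p - 1 \<in> D P p" using lab_interval[OF bP sP LD[OF iL] self_D[OF iP(2)], of "p - 1"] ip by simp
      moreover have "p - 1 < p" using p1 by simp
      ultimately have "p - 1 \<in> Lset P p" using Lset_iff[OF bP] by simp
      then have "p - 1 \<le> M" unfolding M_def using Max_ge[OF fin] DiL by simp
      then have SM: "Suc M = p" using Mp by simp
      have vb: "valbox P g M y"
        unfolding valbox_def using gMy SM Lset_lt[OF bT yL] by simp
      have "(i, M) \<in> SC P e" unfolding SC_def M_def using iP ine ei by simp
      then show False using g_shade[OF _ yT colv vb] by simp
    next
      case 2
      define m where "m = Min (D P i)"
      have mD: "m \<in> D P i" unfolding m_def using Min_in[OF fin] iDi by blast
      have mP: "m \<in> set_tree P" using D_in[OF mD] by simp
      have ygm: "y < g m" using Rset_gt[OF bT RtD[OF bT 2 c3[OF mD]]] .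
      have m1: "1 \<le> m" using mP sP by auto
      have vb: "valbox P g (m - 1) y"
        unfolding valbox_def
      proof (intro conjI impI)
        assume m1P: "m - 1 \<in> set_tree P"
        have nD: "m - 1 \<notin> D P i"
        proof
          assume "m - 1 \<in> D P i"
          then have "m \<le> m - 1" unfolding m_def using Min_le[OF fin] by simp
          then show False using m1 by simp
        qed
        have mi: "m \<le> i" unfolding m_def using Min_le[OF fin iDi] .
        have ip: "i < p" using Lset_lt[OF bP iL] .
        have lt: "m - 1 < p" using mi ip by simp
        have "bef P (m - 1) p"
        proof (rule ccontr)
          assume "\<not> bef P (m - 1) p"
          then have "bef P p (m - 1)" using bef_total[OF m1P iP(2)] lt by auto
          then have "m - 1 \<in> Lset P p" using bef_L[OF bP iP(2) m1P] lt by simp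
          then show False using nD DiL by simp
        qed
        then have b2: "bef T (g (m - 1)) (g p)" using g_bef[OF m1P iP(2)] by simp
        have "g (m - 1) < g p" using g_mono[OF m1P iP(2)] lt by simp
        then show "g (m - 1) < y" using bef_lt_D[OF bT b2 _ LD[OF yL]] by simp
      next
        show "y < g (Suc (m - 1))" using ygm m1 by simp
      qed
      have "(i, m - 1) \<in> SC P e" unfolding SC_def m_def using iP ine ei by simp
      then show False using g_shade[OF _ yT colv vb] by simp
    qed
  qed
qed

lemma c5: assumes r: "is_rchild P i x" and ei: "e i" shows "is_rchild T (g i) (g x)"
proof -
  have DiR: "D P i = Rset P x" and iR: "i \<in> Rset P x" using rchild_D[OF bP r] by auto
  have iP: "i \<in> set_tree P" "x \<in> set_tree P" using R_in[OF iR] by auto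
  have giR: "g i \<in> Rset T (g x)" using c2[OF r] .
  define y where "y = value (rsub (subtree T (g x)))"
  have yc: "is_rchild T y (g x)" using rchild_of_R[OF giR] unfolding y_def .
  have Dy: "D T y = Rset T (g x)" and yR: "y \<in> Rset T (g x)" using rchild_D[OF bT yc] by auto
  show ?thesis
  proof (rule ccontr)
    assume ne: "\<not> ?thesis"
    then have giy: "g i \<noteq> y" using yc by auto
    have giDy: "g i \<in> D T y" using Dy giR by simp
    have yT: "y \<in> set_tree T" using R_in[OF yR] by simp
    have byi: "bef T y (g i)" using bef_D[OF bT giDy] giy by simp
    have ypne: "y \<noteq> g x" using Rset_gt[OF bT yR] by simp
    have bxy: "bef T (g x) y" using bef_D[OF bT RD[OF yR] ypne] .
    have colv: "col T P g i y"
      unfolding col_def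
    proof (intro conjI ballI impI)
      show "bef T y (g i)" by (rule byi)
    next
      fix a assume aP: "a \<in> set_tree P" and ba: "bef P a i"
      have "a = x \<or> a \<in> Lset P x \<or> bef P a x" using rchild_before[OF bP r aP ba] .
      then show "bef T (g a) y"
      proof (elim disjE)
        assume "a = x" then show ?thesis using bxy by simp
      next
        assume "a \<in> Lset P x"
        then have "g a \<in> Lset T (g x)" using c1 by simp
        then show ?thesis using bef_split[OF bT _ yR] by simp
      next
        assume "bef P a x"
        then have "bef T (g a) (g x)" using g_bef[OF aP iP(2)] by simp
        then show ?thesis using bef_trans[OF _ bxy] by simp
      qed
    qed
    have ine: "i \<noteq> value P" using child_not_root[OF bP] r unfolding is_child_def by blast
    have fin: "finite (D P i)" by (rule DP_fin)
    have iDi: "i \<in> D P i" using self_D[OF iP(1)] .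
    have xi: "x < i" using Rset_gt[OF bP iR] .
    consider "g i \<in> Lset T y" | "g i \<in> Rset T y" using D_cases[OF bT giDy] giy by blast
    then show False
    proof cases
      case 2
      define m where "m = Min (D P i)"
      have mD: "m \<in> D P i" unfolding m_def using Min_in[OF fin] iDi by blast
      have ygm: "y < g m" using Rset_gt[OF bT RtD[OF bT 2 c3[OF mD]]] .
      have xm: "x < m" using Rset_gt[OF bP] mD DiR by simp
      have mx: "m = Suc x"
      proof (rule ccontr)
        assume "m \<noteq> Suc x"
        then have lt: "Suc x < m" using xm by simp
        have "Suc x \<in> D P x" using lab_interval[OF bP sP self_D[OF iP(2)] RD, of m "Suc x"] mD DiR lt by simp
        then have "Suc x \<in> D P i" using Rset_iff[OF bP] DiR by simp
        then have "m \<le> Suc x" unfolding m_def using Min_le[OF fin] by simp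
        then show False using lt by simp
      qed
      have vb: "valbox P g (m - 1) y"
        unfolding valbox_def using mx ygm Rset_gt[OF bT yR] by simp
      have "(i, m - 1) \<in> SC P e" unfolding SC_def m_def using iP ine ei by simp
      then show False using g_shade[OF _ yT colv vb] by simp
    next
      case 1
      define M where "M = Max (D P i)"
      have MD: "M \<in> D P i" unfolding M_def using Max_in[OF fin] iDi by blast
      have gMy: "g M < y" using Lset_lt[OF bT LtD[OF bT 1 c3[OF MD]]] .
      have iM: "i \<le> M" unfolding M_def using Max_ge[OF fin iDi] .
      have vb: "valbox P g M y"
        unfolding valbox_def
      proof (intro conjI impI)
        show "g M < y" by (rule gMy)
      next
        assume SP: "Suc M \<in> set_tree P"
        have xS: "x < Suc M" using xi iM by simp
        have "bef P (Suc M) x"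
        proof (rule ccontr)
          assume "\<not> bef P (Suc M) x"
          then have bx: "bef P x (Suc M)" using bef_total[OF SP iP(2)] xS by auto
          have "Suc M \<in> D P x \<or> (\<exists>w. x \<in> Lset P w \<and> Suc M \<in> Rset P w)"
            using bef_char[OF bP iP(2) SP] bx xS by simp
          then show False
          proof
            assume "Suc M \<in> D P x"
            then have "Suc M \<in> D P i" using Rset_iff[OF bP] DiR xS by simp
            then have "Suc M \<le> M" unfolding M_def using Max_ge[OF fin] by simp
            then show False by simp
          next
            assume "\<exists>w. x \<in> Lset P w \<and> Suc M \<in> Rset P w"
            then obtain w where w: "x \<in> Lset P w" "Suc M \<in> Rset P w" by blast
            have "M \<in> D P x" using RD MD DiR by simp
            then have "M \<in> Lset P w" using LtD[OF bP w(1)] by simp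
            then have "M < w" using Lset_lt[OF bP] by simp
            moreover have "w < Suc M" using Rset_gt[OF bP w(2)] .
            ultimately show False by simp
          qed
        qed
        then have b2: "bef T (g (Suc M)) (g x)" using g_bef[OF SP iP(2)] by simp
        have "g x < g (Suc M)" using g_mono[OF iP(2) SP] xS by simp
        then show "y < g (Suc M)" using bef_gt_D[OF bT b2 _ RD[OF yR]] by simp
      qed
      have "(i, M) \<in> SC P e" unfolding SC_def M_def using iP ine ei by simp
      then show False using g_shade[OF _ yT colv vb] by simp
    qed
  qed
qed

lemma occ_contains: "tree_contains T P e"
  unfolding tree_contains_def
proof (intro exI conjI ballI impI)
  show "inj_on g (set_tree P)" using g_inj by (meson inj_onI)
  show "g ` set_tree P \<subseteq> set_tree T" using g_in by blast
next
  fix i assume iP: "i \<in> set_tree P" and ir: "i \<noteq> value P"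
  {
    assume l: "is_lchild P i (parent P i)"
    show "if e i then is_lchild T (g i) (g (parent P i)) else g i \<in> Lset T (g (parent P i))"
      using c4[OF l] c1 lchild_D[OF bP l] by simp
  next
    assume l: "is_rchild P i (parent P i)"
    show "if e i then is_rchild T (g i) (g (parent P i)) else g i \<in> Rset T (g (parent P i))"
      using c5[OF l] c2[OF l] by simp
  }
qed

end

context
  fixes T P :: "nat tree" and e :: "nat \<Rightarrow> bool" and f :: "nat \<Rightarrow> nat" and k :: nat
  assumes bT: "bst T" and bP: "bst P" and sP: "set_tree P = {1..k}"
    and fin: "inj_on f (set_tree P)" and fT: "f ` set_tree P \<subseteq> set_tree T"
    and fc: "\<forall>i \<in> set_tree P. i \<noteq> value P \<longrightarrow>
           (is_lchild P i (parent P i) \<longrightarrow>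
              (if e i then is_lchild T (f i) (f (parent P i))
               else f i \<in> Lset T (f (parent P i)))) \<and>
           (is_rchild P i (parent P i) \<longrightarrow>
              (if e i then is_rchild T (f i) (f (parent P i))
               else f i \<in> Rset T (f (parent P i))))"
begin

lemma f_in: "a \<in> set_tree P \<Longrightarrow> f a \<in> set_tree T" using fT by blast

lemma e1: assumes l: "is_lchild P i p" shows "f i \<in> Lset T (f p)"
  and "e i \<Longrightarrow> is_lchild T (f i) (f p)"
proof -
  have ch: "is_child P i p" using l unfolding is_child_def by simp
  have pe: "parent P i = p" using parent_eq[OF bP ch] .
  have ine: "i \<noteq> value P" using child_not_root[OF bP ch] .
  have iP: "i \<in> set_tree P" using L_in lchild_D[OF bP l] by metis
  note h0 = bspec[OF fc iP, unfolded pe]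
  have h: "if e i then is_lchild T (f i) (f p) else f i \<in> Lset T (f p)" using h0 ine l by simp
  then show "f i \<in> Lset T (f p)" using lchild_D[OF bT] by (cases "e i") auto
  show "e i \<Longrightarrow> is_lchild T (f i) (f p)" using h by simp
qed

lemma e2: assumes l: "is_rchild P i p" shows "f i \<in> Rset T (f p)"
  and "e i \<Longrightarrow> is_rchild T (f i) (f p)"
proof -
  have ch: "is_child P i p" using l unfolding is_child_def by simp
  have pe: "parent P i = p" using parent_eq[OF bP ch] .
  have ine: "i \<noteq> value P" using child_not_root[OF bP ch] .
  have iP: "i \<in> set_tree P" using R_in rchild_D[OF bP l] by metis
  note h0 = bspec[OF fc iP, unfolded pe]
  have h: "if e i then is_rchild T (f i) (f p) else f i \<in> Rset T (f p)" using h0 ine l by simp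
  then show "f i \<in> Rset T (f p)" using rchild_D[OF bT] by (cases "e i") auto
  show "e i \<Longrightarrow> is_rchild T (f i) (f p)" using h by simp
qed

lemma e3: "a \<in> D P i \<Longrightarrow> f a \<in> D T (f i)"
proof -
  assume a: "a \<in> D P i"
  show ?thesis
  proof (rule desc_induct[OF bP, of "\<lambda>a x. f a \<in> D T (f x)"])
    fix c p assume cp: "is_child P c p"
    show "f c \<in> D T (f p)"
    proof (cases "is_lchild P c p")
      case True
      then show ?thesis using LD[OF e1(1)] by simp
    next
      case False
      then have "is_rchild P c p" using cp unfolding is_child_def by simp
      then show ?thesis using RD[OF e2(1)] by simp
    qed
  next
    fix x assume "x \<in> set_tree P" then show "f x \<in> D T (f x)" using self_D[OF f_in] by simp
  next
    fix a b c assume "f a \<in> D T (f b)" "f b \<in> D T (f c)" then show "f a \<in> D T (f c)"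
      using DtD[OF bT] by simp
  qed (rule a)
qed

lemma eL: "a \<in> Lset P i \<Longrightarrow> f a \<in> Lset T (f i)"
proof -
  assume a: "a \<in> Lset P i"
  define c where "c = value (lsub (subtree P i))"
  have cl: "is_lchild P c i" using lchild_of_L[OF a] unfolding c_def .
  have "D P c = Lset P i" using lchild_D[OF bP cl] by simp
  then have "f a \<in> D T (f c)" using e3 a by simp
  then show ?thesis using LtD[OF bT e1(1)[OF cl]] by simp
qed

lemma eR: "a \<in> Rset P i \<Longrightarrow> f a \<in> Rset T (f i)"
proof -
  assume a: "a \<in> Rset P i"
  define c where "c = value (rsub (subtree P i))"
  have cl: "is_rchild P c i" using rchild_of_R[OF a] unfolding c_def .
  have "D P c = Rset P i" using rchild_D[OF bP cl] by simp
  then have "f a \<in> D T (f c)" using e3 a by simp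
  then show ?thesis using RtD[OF bT e2(1)[OF cl]] by simp
qed

lemma f_lt: "a \<in> set_tree P \<Longrightarrow> b \<in> set_tree P \<Longrightarrow> a < b \<Longrightarrow> f a < f b"
proof -
  assume aP: "a \<in> set_tree P" and bP': "b \<in> set_tree P" and ab: "a < b"
  have ne: "a \<noteq> b" "b \<noteq> a" using ab by auto
  consider "bef P a b" | "bef P b a" using bef_total[OF aP bP' ne(1)] by blast
  then show ?thesis
  proof cases
    case 1
    then have "b \<in> D P a \<or> (\<exists>w. a \<in> Lset P w \<and> b \<in> Rset P w)" using bef_char[OF bP aP bP' ne(1)] by simp
    then show ?thesis
    proof
      assume "b \<in> D P a"
      then have "b \<in> Rset P a" using Rset_iff[OF bP] ab by simp
      then show ?thesis using Rset_gt[OF bT eR] by simp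
    next
      assume "\<exists>w. a \<in> Lset P w \<and> b \<in> Rset P w"
      then obtain w where "a \<in> Lset P w" "b \<in> Rset P w" by blast
      then have "f a < f w" "f w < f b" using Lset_lt[OF bT eL] Rset_gt[OF bT eR] by auto
      then show ?thesis by simp
    qed
  next
    case 2
    then have "a \<in> D P b \<or> (\<exists>w. b \<in> Lset P w \<and> a \<in> Rset P w)" using bef_char[OF bP bP' aP ne(2)] by simp
    then show ?thesis
    proof
      assume "a \<in> D P b"
      then have "a \<in> Lset P b" using Lset_iff[OF bP] ab by simp
      then show ?thesis using Lset_lt[OF bT eL] by simp
    next
      assume "\<exists>w. b \<in> Lset P w \<and> a \<in> Rset P w"
      then obtain w where "b \<in> Lset P w" "a \<in> Rset P w" by blast
      then have "b < w" "w < a" using Lset_lt[OF bP] Rset_gt[OF bP] by auto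
      then show ?thesis using ab by simp
    qed
  qed
qed

lemma f_mono: "a \<in> set_tree P \<Longrightarrow> b \<in> set_tree P \<Longrightarrow> a < b \<longleftrightarrow> f a < f b"
  using f_lt by (metis less_asym nat_neq_iff)

lemma f_bef1: "a \<in> set_tree P \<Longrightarrow> b \<in> set_tree P \<Longrightarrow> bef P a b \<Longrightarrow> bef T (f a) (f b)"
proof -
  assume aP: "a \<in> set_tree P" and bP': "b \<in> set_tree P" and ab: "bef P a b"
  have ne: "a \<noteq> b" using ab bef_irrefl by metis
  have "b \<in> D P a \<or> (\<exists>w. a \<in> Lset P w \<and> b \<in> Rset P w)" using bef_char[OF bP aP bP' ne] ab by simp
  then show ?thesis
  proof
    assume "b \<in> D P a"
    moreover have "f b \<noteq> f a" using fin aP bP' ne unfolding inj_on_def by metis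
    ultimately show ?thesis using bef_D[OF bT e3] by simp
  next
    assume "\<exists>w. a \<in> Lset P w \<and> b \<in> Rset P w"
    then obtain w where "a \<in> Lset P w" "b \<in> Rset P w" by blast
    then show ?thesis using bef_split[OF bT eL eR] by simp
  qed
qed

lemma f_bef: "a \<in> set_tree P \<Longrightarrow> b \<in> set_tree P \<Longrightarrow> bef P a b \<longleftrightarrow> bef T (f a) (f b)"
proof
  assume "a \<in> set_tree P" "b \<in> set_tree P" "bef P a b" then show "bef T (f a) (f b)" using f_bef1 by simp
next
  assume aP: "a \<in> set_tree P" and bP': "b \<in> set_tree P" and h: "bef T (f a) (f b)"
  show "bef P a b"
  proof (rule ccontr)
    assume n: "\<not> bef P a b"
    show False
    proof (cases "a = b")
      case True then show False using h bef_irrefl by metis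
    next
      case False
      then have "bef P b a" using bef_total[OF aP bP'] n by blast
      then have "bef T (f b) (f a)" using f_bef1[OF bP' aP] by simp
      then show False using bef_asym[OF h] by simp
    qed
  qed
qed

lemma f_shade: assumes ij: "(i, j) \<in> SC P e" and yT: "y \<in> set_tree T" and cl: "col T P f i y"
  and vb: "valbox P f j y" shows False
proof -
  have iP: "i \<in> set_tree P" using ij unfolding SC_def by simp
  have byi: "bef T y (f i)" using cl unfolding col_def by simp
  have ynD: "y \<notin> D T (f i)" using bef_not_D[OF bT byi] .
  have cases: "j \<in> BR_minus P i \<or> (i \<noteq> value P \<and> e i \<and> (j = Min (D P i) - 1 \<or> j = Max (D P i)))"
    using ij unfolding SC_def by simp
  then show False
  proof
    assume jB: "j \<in> BR_minus P i"
    have jD: "j \<in> D P i" and Rne: "Rset P j \<noteq> {}" using BR_minus_facts[OF bP jB] by auto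
    obtain b where bR: "b \<in> Rset P j" using Rne by blast
    have jb: "j < b" using Rset_gt[OF bP bR] .
    have bD: "b \<in> D P i" using DtD[OF bP jD RD[OF bR]] .
    have SjD: "Suc j \<in> D P i" using lab_interval[OF bP sP jD bD, of "Suc j"] jb by simp
    have jP: "j \<in> set_tree P" "Suc j \<in> set_tree P" using D_in[OF jD] D_in[OF SjD] by auto
    have "f j < y" "y < f (Suc j)" using vb jP unfolding valbox_def by auto
    then show False using interval[OF bT yT ynD e3[OF jD] e3[OF SjD]] by simp
  next
    assume h: "i \<noteq> value P \<and> e i \<and> (j = Min (D P i) - 1 \<or> j = Max (D P i))"
    obtain p where ch: "is_child P i p" using has_parent[OF bP iP] h by blast
    then consider "is_lchild P i p" | "is_rchild P i p" unfolding is_child_def by blast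
    then show False
    proof cases
      case 1
      have iL: "i \<in> Lset P p" using lchild_D[OF bP 1] by simp
      have pP: "p \<in> set_tree P" using L_in[OF iL] by simp
      have "bef P p i" using bef_D[OF bP LD[OF iL]] Lset_lt[OF bP iL] by simp
      then have "bef T (f p) y" using cl pP unfolding col_def by blast
      moreover have "is_lchild T (f i) (f p)" using e1(2)[OF 1] h by simp
      ultimately show False using lchild_nothing_between[OF bT _ _ byi] by blast
    next
      case 2
      have iR: "i \<in> Rset P p" and DiR: "D P i = Rset P p"
        using rchild_D[OF bP 2] by auto
      have pP: "p \<in> set_tree P" using R_in[OF iR] by simp
      have "bef P p i" using bef_D[OF bP RD[OF iR]] Rset_gt[OF bP iR] by simp
      then have bpy: "bef T (f p) y" using cl pP unfolding col_def by blast
      have rc: "is_rchild T (f i) (f p)" using e2(2)[OF 2] h by simp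
      have "y \<in> Lset T (f p)" using rchild_between[OF bT rc yT bpy byi] .
      then have yfp: "y < f p" using Lset_lt[OF bT] by simp
      have fD: "finite (D P i)" using finite_subset[OF D_sub] by (metis finite_set_tree)
      have iDi: "i \<in> D P i" using self_D[OF iP] .
      have jP: "j \<in> set_tree P \<and> p \<le> j"
      proof (cases "j = Max (D P i)")
        case True
        then have "j \<in> D P i" using Max_in[OF fD] iDi by blast
        then show ?thesis using D_in Rset_gt[OF bP] DiR by fastforce
      next
        case False
        then have jm: "j = Min (D P i) - 1" using h by simp
        have mD: "Min (D P i) \<in> D P i" using Min_in[OF fD] iDi by blast
        then have pm: "p < Min (D P i)" using Rset_gt[OF bP] DiR by simp
        have "Min (D P i) \<in> set_tree P" using D_in[OF mD] by simp
        then have "Min (D P i) \<le> k" using sP by simp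
        moreover have "1 \<le> p" using pP sP by simp
        ultimately have "1 \<le> j" "j \<le> k" "p \<le> j" using jm pm by linarith+
        then show ?thesis using sP by simp
      qed
      have "f p \<le> f j"
      proof (cases "p = j")
        case False
        then have "p < j" using jP by simp
        then show ?thesis using f_mono[OF pP] jP by simp
      qed simp
      moreover have "f j < y" using vb jP unfolding valbox_def by simp
      ultimately show False using yfp by simp
    qed
  qed
qed

lemma emb_occ: "occ T P e f"
  unfolding occ_def using f_in f_mono f_bef f_shade by blast

end

lemma contains_iff_occ:
  assumes bT: "bst T" and bP: "bst P" and sP: "set_tree P = {1..k}"
  shows "tree_contains T P e \<longleftrightarrow> (\<exists>g. occ T P e g)"
proof
  assume "tree_contains T P e"
  then obtain f where "inj_on f (set_tree P)" "f ` set_tree P \<subseteq> set_tree T"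
    "\<forall>i \<in> set_tree P. i \<noteq> value P \<longrightarrow>
           (is_lchild P i (parent P i) \<longrightarrow>
              (if e i then is_lchild T (f i) (f (parent P i))
               else f i \<in> Lset T (f (parent P i)))) \<and>
           (is_rchild P i (parent P i) \<longrightarrow>
              (if e i then is_rchild T (f i) (f (parent P i))
               else f i \<in> Rset T (f (parent P i))))"
    unfolding tree_contains_def by blast
  then show "\<exists>g. occ T P e g" using emb_occ[OF bT bP sP] by blast
next
  assume "\<exists>g. occ T P e g"
  then obtain g where "occ T P e g" by blast
  then show "tree_contains T P e" using occ_contains[OF bT bP sP] by blast
qed

definition nuE :: "nat \<Rightarrow> nat \<Rightarrow> (nat \<Rightarrow> nat) \<Rightarrow> nat \<Rightarrow> nat" where
  "nuE k n \<nu> i = (if i = 0 then 0 else if i = k + 1 then n + 1 else \<nu> i)"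
definition lamE :: "nat \<Rightarrow> nat \<Rightarrow> nat list \<Rightarrow> (nat \<Rightarrow> nat) \<Rightarrow> nat \<Rightarrow> nat" where
  "lamE k n pi \<nu> j = (if j = 0 then 0 else if j = k + 1 then n + 1
      else sorted_list_of_set ((\<lambda>a. pval pi (\<nu> a)) ` {1..k}) ! (j - 1))"

lemma mesh_contains_alt: "mesh_contains pi tau C \<longleftrightarrow>
   (\<exists>\<nu>. strict_mono_on {1..length tau} \<nu> \<and> \<nu> ` {1..length tau} \<subseteq> {1..length pi} \<and>
     (\<forall>a \<in> {1..length tau}. \<forall>b \<in> {1..length tau}.
            pval pi (\<nu> a) < pval pi (\<nu> b) \<longleftrightarrow> pval tau a < pval tau b) \<and>
     (\<forall>(i, j) \<in> C. \<not> (\<exists>x \<in> {1..length pi}. nuE (length tau) (length pi) \<nu> i < x \<and>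
          x < nuE (length tau) (length pi) \<nu> (i + 1) \<and>
          lamE (length tau) (length pi) pi \<nu> j < pval pi x \<and> pval pi x < lamE (length tau) (length pi) pi \<nu> (j + 1))))"
  unfolding mesh_contains_def Let_def nuE_def lamE_def by simp

definition pos :: "'a tree \<Rightarrow> 'a \<Rightarrow> nat" where
  "pos t v = Suc (idx (preorder t) v)"

lemma pval_pos: "v \<in> set_tree t \<Longrightarrow> pval (preorder t) (pos t v) = v"
  unfolding pval_def pos_def using nth_idx[of v "preorder t"] by simp

lemma pos_range: "v \<in> set_tree t \<Longrightarrow> pos t v \<in> {1..length (preorder t)}"
  unfolding pos_def using idx_lt[of v "preorder t"] by simp

lemma pos_pval: "bst t \<Longrightarrow> x \<in> {1..length (preorder t)} \<Longrightarrow>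
   pval (preorder t) x \<in> set_tree t \<and> pos t (pval (preorder t) x) = x"
proof -
  assume b: "bst t" and x: "x \<in> {1..length (preorder t)}"
  have i: "x - 1 < length (preorder t)" using x by auto
  have "idx (preorder t) (preorder t ! (x - 1)) = x - 1" using idx_nth[OF bst_distinct[OF b] i] .
  moreover have "preorder t ! (x - 1) \<in> set (preorder t)" using nth_mem[OF i] .
  ultimately show ?thesis unfolding pval_def pos_def using x by simp
qed

lemma bef_pos: "bef t a b \<longleftrightarrow> pos t a < pos t b"
  unfolding bef_def pos_def by simp

lemma rho_pos: "bst P \<Longrightarrow> i \<in> set_tree P \<Longrightarrow> rho P i = pos P i"
  unfolding rho_def
proof (rule the_equality)
  assume "bst P" and i: "i \<in> set_tree P"
  show "pos P i \<in> {1..length (preorder P)} \<and> pval (preorder P) (pos P i) = i"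
    using pos_range[OF i] pval_pos[OF i] by simp
next
  fix m assume b: "bst P" and h: "m \<in> {1..length (preorder P)} \<and> pval (preorder P) m = i"
  have "pos P (pval (preorder P) m) = m" using pos_pval[OF b conjunct1[OF h]] by simp
  then show "m = pos P i" using h by simp
qed

lemma len_trees: "t \<in> trees n \<Longrightarrow> length (preorder t) = n"
proof -
  assume "t \<in> trees n"
  then have "bst t" "set_tree t = {1..n}" by (auto simp: trees_def)
  then have "distinct (preorder t)" "set (preorder t) = {1..n}" using bst_distinct by auto
  then have "card {1..n} = length (preorder t)" using distinct_card by metis
  then show ?thesis by simp
qed

lemma sorted_set_id: "sorted_wrt (<) (xs :: nat list) \<Longrightarrow> sorted_list_of_set (set xs) = xs"
proof -
  assume "sorted_wrt (<) xs"
  then have "sorted xs" "distinct xs" using strict_sorted_iff by blast+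
  then show ?thesis by (simp add: sorted_list_of_set_sort_remdups distinct_remdups_id sorted_sort_id)
qed

lemma sorted_img: "strict_mono_on {1..k} (g :: nat \<Rightarrow> nat) \<Longrightarrow> sorted_list_of_set (g ` {1..k}) = map g [1..<Suc k]"
proof -
  assume sm: "strict_mono_on {1..k} g"
  have ss: "sorted_wrt (<) (map g [1..<Suc k])"
    unfolding sorted_wrt_iff_nth_less
  proof (intro allI impI)
    fix i j assume "i < j" "j < length (map g [1..<Suc k])"
    then show "map g [1..<Suc k] ! i < map g [1..<Suc k] ! j"
      using sm by (simp add: strict_mono_on_def nth_upt del: upt_Suc)
  qed
  have "set (map g [1..<Suc k]) = g ` {1..k}"
    by (simp only: set_map set_upt atLeastLessThanSuc_atLeastAtMost)
  then show ?thesis using sorted_set_id[OF ss] by simp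
qed

lemma sigma_C_eq: "sigma_C P e = (\<lambda>(i, j). (rho P i - 1, j)) ` SC P e"
proof (rule set_eqI, rule iffI)
  fix z assume "z \<in> sigma_C P e"
  then consider (a) i j where "i \<in> set_tree P" "j \<in> BR_minus P i" "z = (rho P i - 1, j)"
     | (b) i where "i \<in> set_tree P" "i \<noteq> value P" "e i"
         "z = (rho P i - 1, Min (D P i) - 1) \<or> z = (rho P i - 1, Max (D P i))"
    unfolding sigma_C_def D_def by (auto split: if_splits)
  then show "z \<in> (\<lambda>(i, j). (rho P i - 1, j)) ` SC P e"
  proof cases
    case a
    then have "(i, j) \<in> SC P e" unfolding SC_def by simp
    then show ?thesis using a(3) by force
  next
    case b
    then consider "z = (rho P i - 1, Min (D P i) - 1)" | "z = (rho P i - 1, Max (D P i))" by blast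
    then show ?thesis
    proof cases
      case 1
      have "(i, Min (D P i) - 1) \<in> SC P e" unfolding SC_def using b by simp
      then show ?thesis using 1 by force
    next
      case 2
      have "(i, Max (D P i)) \<in> SC P e" unfolding SC_def using b by simp
      then show ?thesis using 2 by force
    qed
  qed
next
  fix z assume "z \<in> (\<lambda>(i, j). (rho P i - 1, j)) ` SC P e"
  then obtain i j where ij: "(i, j) \<in> SC P e" "z = (rho P i - 1, j)" by auto
  then have "i \<in> set_tree P" "j \<in> BR_minus P i \<or> (i \<noteq> value P \<and> e i \<and> (j = Min (D P i) - 1 \<or> j = Max (D P i)))"
    unfolding SC_def by auto
  then consider "i \<in> set_tree P" "j \<in> BR_minus P i" | "i \<in> set_tree P - {value P}" "e i" "j = Min (D P i) - 1"
    | "i \<in> set_tree P - {value P}" "e i" "j = Max (D P i)" by blast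
  then show "z \<in> sigma_C P e"
  proof cases
    case 1
    then have "z \<in> {(rho P i - 1, j) | j. j \<in> BR_minus P i}" using ij(2) by blast
    then show ?thesis unfolding sigma_C_def using 1(1) by blast
  next
    case 2
    then have "z \<in> (if e i then {(rho P i - 1, Min (set_tree (subtree P i)) - 1),
                     (rho P i - 1, Max (set_tree (subtree P i)))} else {})" using ij(2) by (simp add: D_def)
    then show ?thesis unfolding sigma_C_def using 2(1) by blast
  next
    case 3
    then have "z \<in> (if e i then {(rho P i - 1, Min (set_tree (subtree P i)) - 1),
                     (rho P i - 1, Max (set_tree (subtree P i)))} else {})" using ij(2) by (simp add: D_def)
    then show ?thesis unfolding sigma_C_def using 3(1) by blast
  qed
qed

lemma lamE_eq:
  assumes sm: "strict_mono_on {1..k} g" and img: "(\<lambda>a. pval pi (\<nu> a)) ` {1..k} = g ` {1..k}"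
    and j: "1 \<le> j" "j \<le> k"
  shows "lamE k n pi \<nu> j = g j"
proof -
  have "lamE k n pi \<nu> j = sorted_list_of_set (g ` {1..k}) ! (j - 1)" unfolding lamE_def using j img by simp
  also have "\<dots> = map g [1..<Suc k] ! (j - 1)" using sorted_img[OF sm] by simp
  also have "\<dots> = g j" using j by (simp del: upt_Suc add: nth_upt)
  finally show ?thesis .
qed

lemma SC_le: "bst P \<Longrightarrow> set_tree P = {1..k} \<Longrightarrow> (i, j) \<in> SC P e \<Longrightarrow> i \<in> set_tree P \<and> j \<le> k"
proof -
  assume b: "bst P" and s: "set_tree P = {1..k}" and h: "(i, j) \<in> SC P e"
  have iP: "i \<in> set_tree P" using h unfolding SC_def by simp
  have fin: "finite (D P i)" using finite_subset[OF D_sub] by (metis finite_set_tree)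
  have iD: "i \<in> D P i" using self_D[OF iP] .
  have "j \<in> BR_minus P i \<or> j = Min (D P i) - 1 \<or> j = Max (D P i)" using h unfolding SC_def by auto
  then have "j \<in> D P i \<or> j = Min (D P i) - 1 \<or> j = Max (D P i)" using BR_minus_facts[OF b] by blast
  moreover have "Min (D P i) \<in> D P i" "Max (D P i) \<in> D P i" using Min_in[OF fin] Max_in[OF fin] iD by auto
  ultimately have "j \<in> D P i \<or> (j \<le> Min (D P i) \<and> Min (D P i) \<in> D P i)" by auto
  moreover have "x \<in> D P i \<Longrightarrow> x \<le> k" for x using D_sub[of P i] s by auto
  ultimately show ?thesis using iP by fastforce
qed

lemma mesh_iff_occ:
  assumes T: "T \<in> trees n" and P: "P \<in> trees k"
  shows "mesh_contains (preorder T) (preorder P) (sigma_C P e) \<longleftrightarrow> (\<exists>g. occ T P e g)"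
proof -
  have bT: "bst T" and sT: "set_tree T = {1..n}" using T by (auto simp: trees_def)
  have bP: "bst P" and sP: "set_tree P = {1..k}" using P by (auto simp: trees_def)
  have lT: "length (preorder T) = n" using len_trees[OF T] .
  have lP: "length (preorder P) = k" using len_trees[OF P] .
  have pP1: "pval (preorder P) a \<in> set_tree P \<and> pos P (pval (preorder P) a) = a" if "a \<in> {1..k}" for a
    using pos_pval[OF bP] that lP by simp
  have pP2: "pos P l \<in> {1..k} \<and> pval (preorder P) (pos P l) = l" if "l \<in> set_tree P" for l
    using pos_range[OF that] pval_pos[OF that] lP by simp
  have pT1: "pval (preorder T) a \<in> set_tree T \<and> pos T (pval (preorder T) a) = a" if "a \<in> {1..n}" for a
    using pos_pval[OF bT] that lT by simp
  have pT2: "pos T l \<in> {1..n} \<and> pval (preorder T) (pos T l) = l" if "l \<in> set_tree T" for l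
    using pos_range[OF that] pval_pos[OF that] lT by simp
  have nu_eq: "1 \<le> i \<Longrightarrow> i \<le> k \<Longrightarrow> nuE k n \<nu> i = \<nu> i" for \<nu> i unfolding nuE_def by simp
  have rho_eq: "i \<in> set_tree P \<Longrightarrow> rho P i = pos P i" for i using rho_pos[OF bP] .
  show ?thesis unfolding mesh_contains_alt lT lP sigma_C_eq
  proof
    assume "\<exists>\<nu>. strict_mono_on {1..k} \<nu> \<and> \<nu> ` {1..k} \<subseteq> {1..n} \<and>
     (\<forall>a \<in> {1..k}. \<forall>b \<in> {1..k}.
            pval (preorder T) (\<nu> a) < pval (preorder T) (\<nu> b) \<longleftrightarrow> pval (preorder P) a < pval (preorder P) b) \<and>
     (\<forall>(i, j) \<in> (\<lambda>(i, j). (rho P i - 1, j)) ` SC P e. \<not> (\<exists>x \<in> {1..n}. nuE k n \<nu> i < x \<and>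
          x < nuE k n \<nu> (i + 1) \<and>
          lamE k n (preorder T) \<nu> j < pval (preorder T) x \<and> pval (preorder T) x < lamE k n (preorder T) \<nu> (j + 1)))"
    then obtain \<nu> where sm: "strict_mono_on {1..k} \<nu>" and rng: "\<nu> ` {1..k} \<subseteq> {1..n}"
      and ord: "\<forall>a \<in> {1..k}. \<forall>b \<in> {1..k}.
            pval (preorder T) (\<nu> a) < pval (preorder T) (\<nu> b) \<longleftrightarrow> pval (preorder P) a < pval (preorder P) b"
      and sh: "\<forall>(i, j) \<in> (\<lambda>(i, j). (rho P i - 1, j)) ` SC P e. \<not> (\<exists>x \<in> {1..n}. nuE k n \<nu> i < x \<and>
          x < nuE k n \<nu> (i + 1) \<and>
          lamE k n (preorder T) \<nu> j < pval (preorder T) x \<and> pval (preorder T) x < lamE k n (preorder T) \<nu> (j + 1))"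
      by blast
    define g where "g l = pval (preorder T) (\<nu> (pos P l))" for l
    have gin: "g l \<in> set_tree T" if "l \<in> set_tree P" for l
    proof -
      have "\<nu> (pos P l) \<in> {1..n}" using rng pP2[OF that] by blast
      then show ?thesis unfolding g_def using pT1 by simp
    qed
    have gpos: "pos T (g l) = \<nu> (pos P l)" if "l \<in> set_tree P" for l
    proof -
      have "\<nu> (pos P l) \<in> {1..n}" using rng pP2[OF that] by blast
      then show ?thesis unfolding g_def using pT1 by simp
    qed
    have gmono: "a < b \<longleftrightarrow> g a < g b" if "a \<in> set_tree P" "b \<in> set_tree P" for a b
      using ord pP2[OF that(1)] pP2[OF that(2)] unfolding g_def by simp
    have gsm: "strict_mono_on {1..k} g"
      unfolding strict_mono_on_def
    proof (intro allI impI)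
      fix r s assume h: "r \<in> {1..k} \<and> s \<in> {1..k} \<and> r < s"
      then show "g r < g s" using gmono[of r s] sP by simp
    qed
    have img: "(\<lambda>a. pval (preorder T) (\<nu> a)) ` {1..k} = g ` {1..k}"
    proof (rule set_eqI, rule iffI)
      fix z assume "z \<in> (\<lambda>a. pval (preorder T) (\<nu> a)) ` {1..k}"
      then obtain a where a: "a \<in> {1..k}" "z = pval (preorder T) (\<nu> a)" by blast
      then have "z = g (pval (preorder P) a)" "pval (preorder P) a \<in> {1..k}" using pP1[OF a(1)] sP unfolding g_def by auto
      then show "z \<in> g ` {1..k}" by blast
    next
      fix z assume "z \<in> g ` {1..k}"
      then obtain l where l: "l \<in> {1..k}" "z = g l" by blast
      then have "z = pval (preorder T) (\<nu> (pos P l))" "pos P l \<in> {1..k}" using pP2 sP unfolding g_def by auto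
      then show "z \<in> (\<lambda>a. pval (preorder T) (\<nu> a)) ` {1..k}" by blast
    qed
    have lam: "lamE k n (preorder T) \<nu> j = g j" if "1 \<le> j" "j \<le> k" for j
      using lamE_eq[OF gsm img that] .
    have "occ T P e g"
      unfolding occ_def
    proof (intro conjI ballI)
      fix a assume "a \<in> set_tree P" then show "g a \<in> set_tree T" by (rule gin)
    next
      fix a b assume "a \<in> set_tree P" "b \<in> set_tree P" then show "a < b \<longleftrightarrow> g a < g b" by (rule gmono)
    next
      fix a b assume ab: "a \<in> set_tree P" "b \<in> set_tree P"
      have "bef P a b \<longleftrightarrow> pos P a < pos P b" by (rule bef_pos)
      also have "\<dots> \<longleftrightarrow> \<nu> (pos P a) < \<nu> (pos P b)"
        using strict_mono_on_less[OF sm] pP2[OF ab(1)] pP2[OF ab(2)] by simp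
      also have "\<dots> \<longleftrightarrow> bef T (g a) (g b)" using gpos[OF ab(1)] gpos[OF ab(2)] by (simp add: bef_pos)
      finally show "bef P a b \<longleftrightarrow> bef T (g a) (g b)" .
    next
      fix ij assume ijS: "ij \<in> SC P e"
      obtain i j where ij: "ij = (i, j)" by (cases ij)
      have ijS': "(i, j) \<in> SC P e" using ijS ij by simp
      have iP: "i \<in> set_tree P" and jk: "j \<le> k" using SC_le[OF bP sP ijS'] by auto
      show "case ij of (i, j) \<Rightarrow> \<forall>y \<in> set_tree T. col T P g i y \<longrightarrow> \<not> valbox P g j y"
        unfolding ij
      proof (simp only: prod.case, intro ballI impI notI)
        fix y assume yT: "y \<in> set_tree T" and cl: "col T P g i y" and vb: "valbox P g j y"
        define c where "c = pos P i - 1"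
        have pi: "pos P i \<in> {1..k}" using pP2[OF iP] by simp
        have c1: "c + 1 = pos P i" using pi c_def by simp
        have mem: "(c, j) \<in> (\<lambda>(i, j). (rho P i - 1, j)) ` SC P e"
          using ijS' rho_eq[OF iP] c_def by force
        define x where "x = pos T y"
        have xr: "x \<in> {1..n}" and px: "pval (preorder T) x = y" using pT2[OF yT] x_def by auto
        have byi: "bef T y (g i)" using cl unfolding col_def by simp
        have r1: "x < nuE k n \<nu> (c + 1)"
          using byi gpos[OF iP] nu_eq[of "c + 1" \<nu>] c1 pi x_def by (simp add: bef_pos)
        have r2: "nuE k n \<nu> c < x"
        proof (cases "c = 0")
          case True then show ?thesis using xr by (simp add: nuE_def)
        next
          case False
          then have cr: "c \<in> {1..k}" using c1 pi by auto
          define a where "a = pval (preorder P) c"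
          have aP: "a \<in> set_tree P" and pa: "pos P a = c" using pP1[OF cr] a_def by auto
          have "bef P a i" using pa c1 by (simp add: bef_pos)
          then have "bef T (g a) y" using cl aP unfolding col_def by blast
          then have "\<nu> c < x" using gpos[OF aP] pa x_def by (simp add: bef_pos)
          then show ?thesis using nu_eq[of c \<nu>] cr by simp
        qed
        have r3: "lamE k n (preorder T) \<nu> j < y"
        proof (cases "j = 0")
          case True then show ?thesis using yT sT by (simp add: lamE_def)
        next
          case False
          then have "j \<in> set_tree P" using jk sP by simp
          then show ?thesis using vb lam[of j] False jk unfolding valbox_def by simp
        qed
        have r4: "y < lamE k n (preorder T) \<nu> (j + 1)"
        proof (cases "j = k")
          case True then show ?thesis using yT sT by (simp add: lamE_def)
        next
          case False
          then have "Suc j \<in> set_tree P" using jk sP by simp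
          then show ?thesis using vb lam[of "Suc j"] False jk unfolding valbox_def by simp
        qed
        have "\<exists>x \<in> {1..n}. nuE k n \<nu> c < x \<and> x < nuE k n \<nu> (c + 1) \<and>
          lamE k n (preorder T) \<nu> j < pval (preorder T) x \<and> pval (preorder T) x < lamE k n (preorder T) \<nu> (j + 1)"
          using xr r1 r2 r3 r4 px by blast
        then show False using sh mem by blast
      qed
    qed
    then show "\<exists>g. occ T P e g" by blast
  next
    assume "\<exists>g. occ T P e g"
    then obtain g where og: "occ T P e g" by blast
    have gin: "\<And>a. a \<in> set_tree P \<Longrightarrow> g a \<in> set_tree T" using og unfolding occ_def by blast
    have gmono: "\<And>a b. a \<in> set_tree P \<Longrightarrow> b \<in> set_tree P \<Longrightarrow> a < b \<longleftrightarrow> g a < g b"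
      using og unfolding occ_def by blast
    have gbef: "\<And>a b. a \<in> set_tree P \<Longrightarrow> b \<in> set_tree P \<Longrightarrow> bef P a b \<longleftrightarrow> bef T (g a) (g b)"
      using og unfolding occ_def by blast
    have gsh: "\<And>i j y. (i, j) \<in> SC P e \<Longrightarrow> y \<in> set_tree T \<Longrightarrow> col T P g i y \<Longrightarrow> valbox P g j y \<Longrightarrow> False"
      using og unfolding occ_def by blast
    define \<nu> where "\<nu> a = pos T (g (pval (preorder P) a))" for a
    have nuv: "pval (preorder T) (\<nu> a) = g (pval (preorder P) a)" if "a \<in> {1..k}" for a
      unfolding \<nu>_def using pval_pos[OF gin] pP1[OF that] by simp
    have nupos: "\<nu> (pos P l) = pos T (g l)" if "l \<in> set_tree P" for l
      unfolding \<nu>_def using pP2[OF that] by simp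
    have sm: "strict_mono_on {1..k} \<nu>"
      unfolding strict_mono_on_def
    proof (intro allI impI)
      fix a b assume h: "a \<in> {1..k} \<and> b \<in> {1..k} \<and> a < b"
      then have "bef P (pval (preorder P) a) (pval (preorder P) b)" using pP1 by (simp add: bef_pos)
      then have "bef T (g (pval (preorder P) a)) (g (pval (preorder P) b))" using gbef pP1 h by simp
      then show "\<nu> a < \<nu> b" unfolding \<nu>_def bef_pos .
    qed
    have rng: "\<nu> ` {1..k} \<subseteq> {1..n}"
    proof
      fix z assume "z \<in> \<nu> ` {1..k}"
      then obtain a where a: "a \<in> {1..k}" "z = \<nu> a" by blast
      then show "z \<in> {1..n}" unfolding \<nu>_def using pT2[OF gin] pP1[OF a(1)] by simp
    qed
    have ord: "\<forall>a \<in> {1..k}. \<forall>b \<in> {1..k}.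
            pval (preorder T) (\<nu> a) < pval (preorder T) (\<nu> b) \<longleftrightarrow> pval (preorder P) a < pval (preorder P) b"
      using nuv gmono pP1 by simp
    have gsm: "strict_mono_on {1..k} g"
      unfolding strict_mono_on_def
    proof (intro allI impI)
      fix r s assume h: "r \<in> {1..k} \<and> s \<in> {1..k} \<and> r < s"
      then show "g r < g s" using gmono[of r s] sP by simp
    qed
    have img: "(\<lambda>a. pval (preorder T) (\<nu> a)) ` {1..k} = g ` {1..k}"
    proof (rule set_eqI, rule iffI)
      fix z assume "z \<in> (\<lambda>a. pval (preorder T) (\<nu> a)) ` {1..k}"
      then obtain a where a: "a \<in> {1..k}" "z = pval (preorder T) (\<nu> a)" by blast
      then have "z = g (pval (preorder P) a)" "pval (preorder P) a \<in> {1..k}" using nuv pP1[OF a(1)] sP by auto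
      then show "z \<in> g ` {1..k}" by blast
    next
      fix z assume "z \<in> g ` {1..k}"
      then obtain l where l: "l \<in> {1..k}" "z = g l" by blast
      then have "z = pval (preorder T) (\<nu> (pos P l))" "pos P l \<in> {1..k}"
        using nuv pP2 sP by auto
      then show "z \<in> (\<lambda>a. pval (preorder T) (\<nu> a)) ` {1..k}" by blast
    qed
    have lam: "lamE k n (preorder T) \<nu> j = g j" if "1 \<le> j" "j \<le> k" for j
      using lamE_eq[OF gsm img that] .
    have sh: "\<forall>(c, j) \<in> (\<lambda>(i, j). (rho P i - 1, j)) ` SC P e. \<not> (\<exists>x \<in> {1..n}. nuE k n \<nu> c < x \<and>
          x < nuE k n \<nu> (c + 1) \<and>
          lamE k n (preorder T) \<nu> j < pval (preorder T) x \<and> pval (preorder T) x < lamE k n (preorder T) \<nu> (j + 1))"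
    proof (intro ballI)
      fix cj assume "cj \<in> (\<lambda>(i, j). (rho P i - 1, j)) ` SC P e"
      then obtain i j where ijS: "(i, j) \<in> SC P e" and cj: "cj = (rho P i - 1, j)" by auto
      have iP: "i \<in> set_tree P" and jk: "j \<le> k" using SC_le[OF bP sP ijS] by auto
      define c where "c = pos P i - 1"
      have pi: "pos P i \<in> {1..k}" using pP2[OF iP] by simp
      have c1: "c + 1 = pos P i" using pi c_def by simp
      have cj': "cj = (c, j)" using cj rho_eq[OF iP] c_def by simp
      show "case cj of (c, j) \<Rightarrow> \<not> (\<exists>x \<in> {1..n}. nuE k n \<nu> c < x \<and>
          x < nuE k n \<nu> (c + 1) \<and>
          lamE k n (preorder T) \<nu> j < pval (preorder T) x \<and> pval (preorder T) x < lamE k n (preorder T) \<nu> (j + 1))"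
        unfolding cj'
      proof (simp only: prod.case, rule notI)
        assume "\<exists>x \<in> {1..n}. nuE k n \<nu> c < x \<and>
          x < nuE k n \<nu> (c + 1) \<and>
          lamE k n (preorder T) \<nu> j < pval (preorder T) x \<and> pval (preorder T) x < lamE k n (preorder T) \<nu> (j + 1)"
        then obtain x where xr: "x \<in> {1..n}" and r2: "nuE k n \<nu> c < x" and r1: "x < nuE k n \<nu> (c + 1)"
          and r3: "lamE k n (preorder T) \<nu> j < pval (preorder T) x"
          and r4: "pval (preorder T) x < lamE k n (preorder T) \<nu> (j + 1)" by blast
        define y where "y = pval (preorder T) x"
        have yT: "y \<in> set_tree T" and py: "pos T y = x" using pT1[OF xr] y_def by auto
        have cl: "col T P g i y"
          unfolding col_def
        proof (intro conjI ballI impI)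
          have "x < \<nu> (pos P i)" using r1 nu_eq[of "c + 1" \<nu>] c1 pi by simp
          then show "bef T y (g i)" using nupos[OF iP] py by (simp add: bef_pos)
        next
          fix a assume aP: "a \<in> set_tree P" and ba: "bef P a i"
          have pa: "pos P a \<in> {1..k}" using pP2[OF aP] by simp
          have "pos P a < pos P i" using ba by (simp add: bef_pos)
          then have ac: "pos P a \<le> c" and c0: "c \<noteq> 0" and ck: "c \<le> k" using c1 pa pi by auto
          then have "nuE k n \<nu> c = \<nu> c" using nu_eq[of c \<nu>] by simp
          then have "\<nu> c < x" using r2 by simp
          moreover have "\<nu> (pos P a) \<le> \<nu> c"
          proof (cases "pos P a = c")
            case False
            then have "pos P a < c" using ac by simp
            then have "\<nu> (pos P a) < \<nu> c" using strict_mono_onD[OF sm, of "pos P a" c] pa c0 ck by simp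
            then show ?thesis by simp
          qed simp
          ultimately have "pos T (g a) < pos T y" using nupos[OF aP] py by simp
          then show "bef T (g a) y" by (simp add: bef_pos)
        qed
        have vb: "valbox P g j y"
          unfolding valbox_def
        proof (intro conjI impI)
          assume "j \<in> set_tree P"
          then have "1 \<le> j" "j \<le> k" using sP by auto
          then show "g j < y" using r3 lam y_def by simp
        next
          assume "Suc j \<in> set_tree P"
          then have "1 \<le> Suc j" "Suc j \<le> k" using sP by auto
          then show "y < g (Suc j)" using r4 lam[of "Suc j"] y_def by simp
        qed
        show False using gsh[OF ijS yT cl vb] .
      qed
    qed
    show "\<exists>\<nu>. strict_mono_on {1..k} \<nu> \<and> \<nu> ` {1..k} \<subseteq> {1..n} \<and>
     (\<forall>a \<in> {1..k}. \<forall>b \<in> {1..k}.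
            pval (preorder T) (\<nu> a) < pval (preorder T) (\<nu> b) \<longleftrightarrow> pval (preorder P) a < pval (preorder P) b) \<and>
     (\<forall>(i, j) \<in> (\<lambda>(i, j). (rho P i - 1, j)) ` SC P e. \<not> (\<exists>x \<in> {1..n}. nuE k n \<nu> i < x \<and>
          x < nuE k n \<nu> (i + 1) \<and>
          lamE k n (preorder T) \<nu> j < pval (preorder T) x \<and> pval (preorder T) x < lamE k n (preorder T) \<nu> (j + 1)))"
      using sm rng ord sh by blast
  qed
qed

definition av231 :: "nat list \<Rightarrow> bool" where
  "av231 xs \<longleftrightarrow> (\<forall>i j l. i < j \<longrightarrow> j < l \<longrightarrow> l < length xs \<longrightarrow> \<not> (xs ! l < xs ! i \<and> xs ! i < xs ! j))"

lemma classical_iff: "classical_contains xs [2, 3, 1] \<longleftrightarrow> \<not> av231 xs"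
proof
  have e3: "length [2, 3, 1::nat] = 3" by simp
  assume "classical_contains xs [2, 3, 1]"
  then have "\<exists>\<nu>. strict_mono_on {1..3} \<nu> \<and> \<nu> ` {1..3} \<subseteq> {1..length xs} \<and>
    (\<forall>a \<in> {1..3}. \<forall>b \<in> {1..3}. pval xs (\<nu> a) < pval xs (\<nu> b) \<longleftrightarrow> pval [2, 3, 1] a < pval [2, 3, 1] b)"
    unfolding classical_contains_def mesh_contains_alt e3 by simp
  then obtain \<nu> where sm: "strict_mono_on {1..3} \<nu>" and rng: "\<nu> ` {1..3} \<subseteq> {1..length xs}"
    and ord: "\<forall>a \<in> {1..3}. \<forall>b \<in> {1..3}. pval xs (\<nu> a) < pval xs (\<nu> b) \<longleftrightarrow> pval [2, 3, 1] a < pval [2, 3, 1] b"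
    by blast
  have m: "\<nu> 1 < \<nu> 2" "\<nu> 2 < \<nu> 3" using sm unfolding strict_mono_on_def by auto
  have r0: "\<nu> 1 \<in> {1..length xs}" "\<nu> 3 \<in> {1..length xs}" using rng by (simp_all add: image_subset_iff)
  then have r: "1 \<le> \<nu> 1" "\<nu> 3 \<le> length xs" by auto
  have o1: "pval xs (\<nu> 3) < pval xs (\<nu> 1)" using ord by (auto simp: pval_def)
  have o2: "pval xs (\<nu> 1) < pval xs (\<nu> 2)" using ord by (auto simp: pval_def)
  have q: "\<nu> 1 - 1 < \<nu> 2 - 1" "\<nu> 2 - 1 < \<nu> 3 - 1" "\<nu> 3 - 1 < length xs" using m r by auto
  show "\<not> av231 xs"
    unfolding av231_def
  proof
    assume H: "\<forall>i j l. i < j \<longrightarrow> j < l \<longrightarrow> l < length xs \<longrightarrow> \<not> (xs ! l < xs ! i \<and> xs ! i < xs ! j)"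
    have "\<not> (xs ! (\<nu> 3 - 1) < xs ! (\<nu> 1 - 1) \<and> xs ! (\<nu> 1 - 1) < xs ! (\<nu> 2 - 1))"
      using H q by blast
    then show False using o1 o2 by (simp add: pval_def)
  qed
next
  assume "\<not> av231 xs"
  then obtain i j l where h: "i < j" "j < l" "l < length xs" "xs ! l < xs ! i" "xs ! i < xs ! j"
    unfolding av231_def by blast
  define \<nu> :: "nat \<Rightarrow> nat" where "\<nu> a = (if a = 1 then Suc i else if a = 2 then Suc j else Suc l)" for a
  have s3: "{1..3::nat} = {1, 2, 3}" by auto
  have sm: "strict_mono_on {1..3} \<nu>" unfolding strict_mono_on_def s3 \<nu>_def using h by auto
  have rng: "\<nu> ` {1..3} \<subseteq> {1..length xs}" unfolding s3 \<nu>_def using h by auto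
  have ord: "\<forall>a \<in> {1..3}. \<forall>b \<in> {1..3}. pval xs (\<nu> a) < pval xs (\<nu> b) \<longleftrightarrow> pval [2, 3, 1] a < pval [2, 3, 1] b"
    unfolding s3 \<nu>_def using h by (auto simp: pval_def)
  have e3: "length [2, 3, 1::nat] = 3" by simp
  have ex: "\<exists>\<nu>. strict_mono_on {1..3} \<nu> \<and> \<nu> ` {1..3} \<subseteq> {1..length xs} \<and>
    (\<forall>a \<in> {1..3}. \<forall>b \<in> {1..3}. pval xs (\<nu> a) < pval xs (\<nu> b) \<longleftrightarrow> pval [2, 3, 1] a < pval [2, 3, 1] b)"
    using sm rng ord by blast
  show "classical_contains xs [2, 3, 1]"
    unfolding classical_contains_def mesh_contains_alt e3 using ex by simp
qed

lemma bst_av231: "bst t \<Longrightarrow> av231 (preorder t)"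
  unfolding av231_def
proof (intro allI impI notI)
  fix i j l assume b: "bst t" and h: "i < j" "j < l" "l < length (preorder t)"
    and v: "preorder t ! l < preorder t ! i \<and> preorder t ! i < preorder t ! j"
  have d: "distinct (preorder t)" using bst_distinct[OF b] .
  have il: "i < length (preorder t)" "j < length (preorder t)" using h by auto
  have ii: "idx (preorder t) (preorder t ! i) = i" "idx (preorder t) (preorder t ! j) = j"
    "idx (preorder t) (preorder t ! l) = l" using idx_nth[OF d] il h(3) by auto
  have b1: "bef t (preorder t ! i) (preorder t ! j)" "bef t (preorder t ! j) (preorder t ! l)"
    unfolding bef_def using ii h by auto
  have cin: "preorder t ! l \<in> set_tree t" using nth_mem[OF h(3)] by simp
  show False using no231[OF b cin b1] v by simp
qed

lemma filt_split:
  assumes "\<forall>x \<in> set xs. x < (a::nat)" "\<forall>x \<in> set ys. a < x"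
  shows "filter (\<lambda>y. y < a) (xs @ ys) = xs" "filter (\<lambda>y. \<not> y < a) (xs @ ys) = ys"
proof -
  have "filter (\<lambda>y. y < a) xs = xs" using assms(1) by (simp add: filter_id_conv)
  moreover have "filter (\<lambda>y. y < a) ys = []" using assms(2) by (auto simp: filter_empty_conv)
  ultimately show "filter (\<lambda>y. y < a) (xs @ ys) = xs" by simp
  have "filter (\<lambda>y. \<not> y < a) ys = ys" using assms(2) by (auto simp: filter_id_conv)
  moreover have "filter (\<lambda>y. \<not> y < a) xs = []" using assms(1) by (auto simp: filter_empty_conv)
  ultimately show "filter (\<lambda>y. \<not> y < a) (xs @ ys) = ys" by simp
qed

lemma bst_pre_inj: "bst t1 \<Longrightarrow> bst t2 \<Longrightarrow> preorder t1 = preorder (t2 :: nat tree) \<Longrightarrow> t1 = t2"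
proof (induction t1 arbitrary: t2)
  case Leaf then show ?case by simp
next
  case (Node l a r)
  obtain l' r' where t2: "t2 = Node l' a r'" and e: "preorder l' @ preorder r' = preorder l @ preorder r"
    using Node.prems(3) preorder_eq_Cons_iff[of t2 a "preorder l @ preorder r"] by auto
  have b1: "bst l" "bst r" "\<forall>x \<in> set (preorder l). x < a" "\<forall>x \<in> set (preorder r). a < x" using Node.prems(1) by auto
  have b2: "bst l'" "bst r'" "\<forall>x \<in> set (preorder l'). x < a" "\<forall>x \<in> set (preorder r'). a < x" using Node.prems(2) t2 by auto
  note f1 = filt_split[OF b1(3,4)] and f2 = filt_split[OF b2(3,4)]
  have "preorder l = preorder l'" using f1(1) f2(1) e by metis
  moreover have "preorder r = preorder r'" using f1(2) f2(2) e by metis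
  ultimately show ?case using Node.IH(1)[OF b1(1) b2(1)] Node.IH(2)[OF b1(2) b2(2)] t2 by simp
qed

lemma av231_tl: "av231 (x # ys) \<Longrightarrow> av231 ys"
  unfolding av231_def
proof (intro allI impI)
  fix i j l assume H: "\<forall>i j l. i < j \<longrightarrow> j < l \<longrightarrow> l < length (x # ys) \<longrightarrow>
     \<not> ((x # ys) ! l < (x # ys) ! i \<and> (x # ys) ! i < (x # ys) ! j)"
    and h: "i < j" "j < l" "l < length ys"
  have "\<not> ((x # ys) ! Suc l < (x # ys) ! Suc i \<and> (x # ys) ! Suc i < (x # ys) ! Suc j)"
    using H[rule_format, of "Suc i" "Suc j" "Suc l"] h by simp
  then show "\<not> (ys ! l < ys ! i \<and> ys ! i < ys ! j)" by simp
qed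

lemma av231_app: "av231 (A @ B) \<Longrightarrow> av231 A \<and> av231 B"
proof
  assume H: "av231 (A @ B)"
  show "av231 A"
    unfolding av231_def
  proof (intro allI impI)
    fix i j l assume h: "i < j" "j < l" "l < length A"
    have "\<not> ((A @ B) ! l < (A @ B) ! i \<and> (A @ B) ! i < (A @ B) ! j)"
      using H[unfolded av231_def, rule_format, of i j l] h by simp
    then show "\<not> (A ! l < A ! i \<and> A ! i < A ! j)" using h by (simp add: nth_append)
  qed
  show "av231 B"
    unfolding av231_def
  proof (intro allI impI)
    fix i j l assume h: "i < j" "j < l" "l < length B"
    have "\<not> ((A @ B) ! (length A + l) < (A @ B) ! (length A + i) \<and> (A @ B) ! (length A + i) < (A @ B) ! (length A + j))"
      using H[unfolded av231_def, rule_format, of "length A + i" "length A + j" "length A + l"] h by simp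
    then show "\<not> (B ! l < B ! i \<and> B ! i < B ! j)" by (simp add: nth_append)
  qed
qed

lemma split_aux: "(\<forall>i j. i < j \<longrightarrow> j < length ys \<longrightarrow> \<not> (x < ys ! i \<and> ys ! j < (x::nat))) \<Longrightarrow> x \<notin> set ys \<Longrightarrow>
   ys = filter (\<lambda>y. y < x) ys @ filter (\<lambda>y. \<not> y < x) ys"
proof (induction ys)
  case Nil then show ?case by simp
next
  case (Cons y zs)
  have Czs: "\<forall>i j. i < j \<longrightarrow> j < length zs \<longrightarrow> \<not> (x < zs ! i \<and> zs ! j < x)"
  proof (intro allI impI)
    fix i j assume "i < j" "j < length zs"
    then show "\<not> (x < zs ! i \<and> zs ! j < x)" using Cons.prems(1)[rule_format, of "Suc i" "Suc j"] by simp
  qed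
  show ?case
  proof (cases "y < x")
    case True
    then show ?thesis using Cons.IH[OF Czs] Cons.prems(2) by simp
  next
    case False
    then have yx: "x < y" using Cons.prems(2) by auto
    have "\<not> z < x" if zin: "z \<in> set zs" for z
    proof
      assume zx: "z < x"
      obtain j where j: "j < length zs" "zs ! j = z" using in_set_conv_nth[THEN iffD1, OF zin] by blast
      show False using Cons.prems(1)[rule_format, of 0 "Suc j"] j yx zx by simp
    qed
    then have "filter (\<lambda>y. y < x) zs = []" "filter (\<lambda>y. \<not> y < x) zs = zs"
      by (auto simp: filter_empty_conv filter_id_conv)
    then show ?thesis using False by simp
  qed
qed

lemma split231: "x \<notin> set ys \<Longrightarrow> av231 (x # ys) \<Longrightarrow> ys = filter (\<lambda>y. y < x) ys @ filter (\<lambda>y. \<not> y < x) ys"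
proof -
  assume x: "x \<notin> set ys" and av: "av231 (x # ys)"
  have "\<forall>i j. i < j \<longrightarrow> j < length ys \<longrightarrow> \<not> (x < ys ! i \<and> ys ! j < x)"
  proof (intro allI impI)
    fix i j assume "i < j" "j < length ys"
    then show "\<not> (x < ys ! i \<and> ys ! j < x)"
      using av[unfolded av231_def, rule_format, of 0 "Suc i" "Suc j"] by auto
  qed
  then show ?thesis using split_aux x by blast
qed

lemma exists_tree: "distinct xs \<Longrightarrow> av231 xs \<Longrightarrow> \<exists>t. bst t \<and> preorder t = xs"
proof (induction "length xs" arbitrary: xs rule: less_induct)
  case less
  show ?case
  proof (cases xs)
    case Nil then show ?thesis by (rule_tac x=Leaf in exI) simp
  next
    case (Cons x ys)
    define A where "A = filter (\<lambda>y. y < x) ys"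
    define B where "B = filter (\<lambda>y. \<not> y < x) ys"
    have xn: "x \<notin> set ys" and dys: "distinct ys" using less.prems(1) Cons by auto
    have ys: "ys = A @ B" unfolding A_def B_def using split231[OF xn] less.prems(2) Cons by simp
    have "av231 ys" using av231_tl less.prems(2) Cons by simp
    then have avAB: "av231 A" "av231 B" using av231_app ys by metis+
    have dAB: "distinct A" "distinct B" unfolding A_def B_def using dys by auto
    have lAB: "length A < length xs" "length B < length xs" using ys Cons by auto
    obtain tA where tA: "bst tA" "preorder tA = A" using less.hyps[OF lAB(1) dAB(1) avAB(1)] by blast
    obtain tB where tB: "bst tB" "preorder tB = B" using less.hyps[OF lAB(2) dAB(2) avAB(2)] by blast
    have sA: "\<forall>z \<in> set_tree tA. z < x"
    proof
      fix z assume "z \<in> set_tree tA"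
      then have "z \<in> set A" using tA(2) set_preorder by metis
      then show "z < x" unfolding A_def by simp
    qed
    have sB: "\<forall>z \<in> set_tree tB. x < z"
    proof
      fix z assume "z \<in> set_tree tB"
      then have "z \<in> set B" using tB(2) set_preorder by metis
      then have "z \<in> set ys" "\<not> z < x" unfolding B_def by auto
      then show "x < z" using xn by (cases "z = x") auto
    qed
    have "bst (Node tA x tB)" using tA(1) tB(1) sA sB by simp
    moreover have "preorder (Node tA x tB) = xs" using tA(2) tB(2) ys Cons by simp
    ultimately show ?thesis by blast
  qed
qed

theorem theorem2:
  fixes P :: "nat tree" and e :: "nat \<Rightarrow> bool" and k n :: nat
  assumes "P \<in> trees k"
  shows "bij_betw preorder (trees_avoiding n P e) (perms_avoiding n P e)"
proof -
  have bP: "bst P" and sP: "set_tree P = {1..k}" using assms by (auto simp: trees_def)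
  have key: "mesh_contains (preorder T) (preorder P) (sigma_C P e) \<longleftrightarrow> tree_contains T P e"
    if T: "T \<in> trees n" for T
  proof -
    have bT: "bst T" using T by (simp add: trees_def)
    show ?thesis using mesh_iff_occ[OF T assms] contains_iff_occ[OF bT bP sP] by simp
  qed
  have inj: "inj_on preorder (trees_avoiding n P e)"
  proof (rule inj_onI)
    fix x y assume "x \<in> trees_avoiding n P e" "y \<in> trees_avoiding n P e" "preorder x = preorder y"
    then show "x = y" using bst_pre_inj by (auto simp: trees_avoiding_def trees_def)
  qed
  have img: "preorder ` trees_avoiding n P e = perms_avoiding n P e"
  proof (rule set_eqI, rule iffI)
    fix xs assume "xs \<in> preorder ` trees_avoiding n P e"
    then obtain T where T: "T \<in> trees n" "\<not> tree_contains T P e" and xs: "xs = preorder T"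
      by (auto simp: trees_avoiding_def)
    have bT: "bst T" and sT: "set_tree T = {1..n}" using T(1) by (auto simp: trees_def)
    have "xs \<in> perms n" unfolding perms_def xs using len_trees[OF T(1)] bst_distinct[OF bT] sT by simp
    moreover have "\<not> classical_contains xs [2, 3, 1]" unfolding classical_iff xs using bst_av231[OF bT] by simp
    moreover have "\<not> mesh_contains xs (preorder P) (sigma_C P e)" unfolding xs using key[OF T(1)] T(2) by simp
    ultimately show "xs \<in> perms_avoiding n P e" unfolding perms_avoiding_def by simp
  next
    fix xs assume "xs \<in> perms_avoiding n P e"
    then have p: "xs \<in> perms n" and c: "\<not> classical_contains xs [2, 3, 1]"
      and m: "\<not> mesh_contains xs (preorder P) (sigma_C P e)" unfolding perms_avoiding_def by auto
    have d: "distinct xs" and s: "set xs = {1..n}" using p by (auto simp: perms_def)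
    have "av231 xs" using c classical_iff by simp
    then obtain T where bT: "bst T" and xs: "preorder T = xs" using exists_tree[OF d] by blast
    have T: "T \<in> trees n" unfolding trees_def using bT s xs set_preorder[of T] by simp
    have "\<not> tree_contains T P e" using key[OF T] m xs by simp
    then have "T \<in> trees_avoiding n P e" using T by (simp add: trees_avoiding_def)
    then show "xs \<in> preorder ` trees_avoiding n P e" using xs by blast
  qed
  show ?thesis unfolding bij_betw_def using inj img by simp
qed

end
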